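(* Let $B$ be an admissible Banach sequence space, $X$ a Banach space, $\|\cdot\|_m$ ($m\in\mathbb Z$) norms on $X$ each equivalent to the norm of $X$, and $(A_m)_{m\in\mathbb Z}$ a sequence of bounded linear operators on $X$. If the operator $T_B\colon\mathcal D(T_B)\to Y_B$ is bijective, then $(A_m)_{m\in\mathbb Z}$ admits an exponential dichotomy with respect to the sequence of norms $\|\cdot\|_m$.
   Context: Banach sequence spaces: let $\mathcal S$ be the set of real sequences $(s_n)_{n\in\mathbb Z}$. A linear subspace $B\subset\mathcal S$ with norm $\|\cdot\|_B$ is a normed sequence space if $\mathbf{s}'\in B$ and $|s_n|\le|s'_n|$ for all $n$ imply $\mathbf{s}\in B$ and $\|\mathbf{s}\|_B\le\|\mathbf{s}'\|_B$; it is a Banach sequence space if complete. It is admissible if (i) $\chi_{\{n\}}\in B$ and $\|\chi_{\{n\}}\|_B>0$ for all $n\in\mathbb Z$; (ii) for all $\mathbf{s}\in B$, $m\in\mathbb Z$ the shift $(s_{n+m})_n$ is in $B$ with norm at most $N\|\mathbf{s}\|_B$ for a fixed $N>0$. $Y_B$ is the space of sequences $\mathbf{x}=(x_n)_{n\in\mathbb Z}$ in $X$ with $(\|x_n\|_n)_n\in B$, normed by $\|\mathbf{x}\|_{Y_B}=\|(\|x_n\|_n)_n\|_B$. $T_B$ is defined by $(T_B\mathbf{x})_n=x_n-A_{n-1}x_{n-1}$ on the domain $\mathcal D(T_B)=\{\mathbf{x}\in Y_B: T_B\mathbf{x}\in Y_B\}$. Set $\mathcal A(n,m)=A_{n-1}\cdots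 A_m$ for $n>m$ and $\mathcal A(m,m)=\mathrm{Id}$. The sequence $(A_m)$ admits an exponential dichotomy with respect to the norms $\|\cdot\|_m$ if: (1) there are projections $P_m\colon X\to X$ with $A_mP_m=P_{m+1}A_m$ for all $m$, such that each $A_m|_{\ker P_m}\colon\ker P_m\to\ker P_{m+1}$ is invertible; (2) there are constants $D>0$ and $0<\lambda<1<\mu$ such that for all $x\in X$, $\|\mathcal A(n,m)P_mx\|_n\le D\lambda^{n-m}\|x\|_m$ for $n\ge m$, and $\|\mathcal A(n,m)Q_mx\|_n\le D\mu^{n-m}\|x\|_m$ for $n\le m$, where $Q_m=\mathrm{Id}-P_m$ and, for $n<m$, $\mathcal A(n,m)=(\mathcal A(m,n)|_{\ker P_n})^{-1}\colon\ker P_m\to\ker P_n$. *)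

theory Defs
  imports "HOL-Analysis.Analysis"
begin

definition normed_seq_space :: "(int \<Rightarrow> real) set \<Rightarrow> ((int \<Rightarrow> real) \<Rightarrow> real) \<Rightarrow> bool" where
  "normed_seq_space Bs nB \<longleftrightarrow>
     (\<lambda>n. 0) \<in> Bs \<and>
     (\<forall>s\<in>Bs. \<forall>t\<in>Bs. (\<lambda>n. s n + t n) \<in> Bs) \<and>
     (\<forall>s\<in>Bs. \<forall>c::real. (\<lambda>n. c * s n) \<in> Bs) \<and>
     (\<forall>s\<in>Bs. nB s = 0 \<longleftrightarrow> s = (\<lambda>n. 0)) \<and>
     (\<forall>s\<in>Bs. \<forall>c::real. nB (\<lambda>n. c * s n) = \<bar>c\<bar> * nB s) \<and>
     (\<forall>s\<in>Bs. \<forall>t\<in>Bs. nB (\<lambda>n. s n + t n) \<le> nB s + nB t) \<and>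
     (\<forall>s s'. s' \<in> Bs \<and> (\<forall>n. \<bar>s n\<bar> \<le> \<bar>s' n\<bar>) \<longrightarrow> s \<in> Bs \<and> nB s \<le> nB s')"

definition banach_seq_space :: "(int \<Rightarrow> real) set \<Rightarrow> ((int \<Rightarrow> real) \<Rightarrow> real) \<Rightarrow> bool" where
  "banach_seq_space Bs nB \<longleftrightarrow> normed_seq_space Bs nB \<and>
     (\<forall>f :: nat \<Rightarrow> int \<Rightarrow> real. (\<forall>k. f k \<in> Bs) \<and>
        (\<forall>e>0. \<exists>K. \<forall>k\<ge>K. \<forall>l\<ge>K. nB (\<lambda>n. f k n - f l n) < e)
        \<longrightarrow> (\<exists>s\<in>Bs. (\<lambda>k. nB (\<lambda>n. f k n - s n)) \<longlonglongrightarrow> 0))"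

definition admissible :: "(int \<Rightarrow> real) set \<Rightarrow> ((int \<Rightarrow> real) \<Rightarrow> real) \<Rightarrow> bool" where
  "admissible Bs nB \<longleftrightarrow>
     (\<forall>n. indicator {n} \<in> Bs \<and> nB (indicator {n}) > 0) \<and>
     (\<exists>N>0. \<forall>s\<in>Bs. \<forall>m::int. (\<lambda>n. s (n + m)) \<in> Bs \<and> nB (\<lambda>n. s (n + m)) \<le> N * nB s)"

definition is_norm :: "('a::real_vector \<Rightarrow> real) \<Rightarrow> bool" where
  "is_norm nr \<longleftrightarrow> (\<forall>x y. nr (x + y) \<le> nr x + nr y) \<and>
     (\<forall>c x. nr (c *\<^sub>R x) = \<bar>c\<bar> * nr x) \<and> (\<forall>x. nr x = 0 \<longleftrightarrow> x = 0)"

definition equiv_to_norm :: "('a::real_normed_vector \<Rightarrow> real) \<Rightarrow> bool" where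
  "equiv_to_norm nr \<longleftrightarrow> (\<exists>a>0. \<exists>b>0. \<forall>x. a * norm x \<le> nr x \<and> nr x \<le> b * norm x)"

definition Y_B :: "(int \<Rightarrow> real) set \<Rightarrow> (int \<Rightarrow> 'a \<Rightarrow> real) \<Rightarrow> (int \<Rightarrow> 'a) set" where
  "Y_B Bs nr = {x. (\<lambda>n. nr n (x n)) \<in> Bs}"

definition Y_B_norm :: "((int \<Rightarrow> real) \<Rightarrow> real) \<Rightarrow> (int \<Rightarrow> 'a \<Rightarrow> real) \<Rightarrow> (int \<Rightarrow> 'a) \<Rightarrow> real" where
  "Y_B_norm nB nr x = nB (\<lambda>n. nr n (x n))"

definition T_B :: "(int \<Rightarrow> 'a \<Rightarrow> 'a::real_vector) \<Rightarrow> (int \<Rightarrow> 'a) \<Rightarrow> (int \<Rightarrow> 'a)" where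
  "T_B A x = (\<lambda>n. x n - A (n - 1) (x (n - 1)))"

definition dom_T_B :: "(int \<Rightarrow> real) set \<Rightarrow> (int \<Rightarrow> 'a \<Rightarrow> real) \<Rightarrow> (int \<Rightarrow> 'a \<Rightarrow> 'a::real_vector) \<Rightarrow> (int \<Rightarrow> 'a) set" where
  "dom_T_B Bs nr A = {x \<in> Y_B Bs nr. T_B A x \<in> Y_B Bs nr}"

text \<open>Cocycle: cocycle A m k = A(m+k-1) o ... o A m, i.e. \<A>(m+k, m).\<close>
fun cocycle :: "(int \<Rightarrow> 'a \<Rightarrow> 'a) \<Rightarrow> int \<Rightarrow> nat \<Rightarrow> 'a \<Rightarrow> 'a" where
  "cocycle A m 0 = id"
| "cocycle A m (Suc k) = A (m + int k) \<circ> cocycle A m k"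

definition evol :: "(int \<Rightarrow> 'a \<Rightarrow> 'a) \<Rightarrow> int \<Rightarrow> int \<Rightarrow> 'a \<Rightarrow> 'a" where
  "evol A n m = cocycle A m (nat (n - m))"

definition exp_dichotomy :: "(int \<Rightarrow> 'a \<Rightarrow> 'a::real_normed_vector) \<Rightarrow> (int \<Rightarrow> 'a \<Rightarrow> real) \<Rightarrow> bool" where
  "exp_dichotomy A nr \<longleftrightarrow>
    (\<exists>P :: int \<Rightarrow> 'a \<Rightarrow> 'a.
       (\<forall>m. bounded_linear (P m) \<and> P m \<circ> P m = P m) \<and>
       (\<forall>m. A m \<circ> P m = P (m + 1) \<circ> A m) \<and>
       (\<forall>m. bij_betw (A m) {x. P m x = 0} {x. P (m + 1) x = 0}) \<and>
       (\<exists>D>0. \<exists>la mu::real. 0 < la \<and> la < 1 \<and> 1 < mu \<and>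
          (\<forall>n m x. n \<ge> m \<longrightarrow>
             nr n (evol A n m (P m x)) \<le> D * la ^ nat (n - m) * nr m x) \<and>
          (\<forall>n m x. n \<le> m \<longrightarrow>
             nr n (the_inv_into {y. P n y = 0} (evol A m n) (x - P m x))
               \<le> D * mu powi (n - m) * nr m x)))"

end

theory Submission imports Defs begin

locale dich =
  fixes Bs :: "(int \<Rightarrow> real) set" and nB :: "(int \<Rightarrow> real) \<Rightarrow> real"
    and nr :: "int \<Rightarrow> 'a::banach \<Rightarrow> real"
    and A :: "int \<Rightarrow> 'a \<Rightarrow> 'a"
  assumes bsp: "banach_seq_space Bs nB"
    and adm: "admissible Bs nB"
    and nrm: "\<forall>m. is_norm (nr m) \<and> equiv_to_norm (nr m)"
    and lin: "\<forall>m. bounded_linear (A m)"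
    and bij: "bij_betw (T_B A) (dom_T_B Bs nr A) (Y_B Bs nr)"
begin

lemma nss: "normed_seq_space Bs nB" using bsp by (simp add: banach_seq_space_def)

lemma B0: "(\<lambda>n. 0) \<in> Bs" using nss by (simp add: normed_seq_space_def)
lemma Badd: "s \<in> Bs \<Longrightarrow> t \<in> Bs \<Longrightarrow> (\<lambda>n. s n + t n) \<in> Bs"
  using nss by (simp add: normed_seq_space_def)
lemma Bscale: "s \<in> Bs \<Longrightarrow> (\<lambda>n. c * s n) \<in> Bs"
  using nss by (simp add: normed_seq_space_def)
lemma Bnorm_scale: "s \<in> Bs \<Longrightarrow> nB (\<lambda>n. c * s n) = \<bar>c\<bar> * nB s"
  using nss by (simp add: normed_seq_space_def)
lemma Bnorm_tri: "s \<in> Bs \<Longrightarrow> t \<in> Bs \<Longrightarrow> nB (\<lambda>n. s n + t n) \<le> nB s + nB t"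
  using nss by (simp add: normed_seq_space_def)
lemma Bnorm_zero: "s \<in> Bs \<Longrightarrow> nB s = 0 \<longleftrightarrow> s = (\<lambda>n. 0)"
  using nss by (simp add: normed_seq_space_def)
lemma Bmono: "s' \<in> Bs \<Longrightarrow> (\<And>n. \<bar>s n\<bar> \<le> \<bar>s' n\<bar>) \<Longrightarrow> s \<in> Bs \<and> nB s \<le> nB s'"
  using nss unfolding normed_seq_space_def by blast

lemma Bnonneg: assumes "s \<in> Bs" shows "0 \<le> nB s"
proof -
  have "nB (\<lambda>n. s n + (-1) * s n) \<le> nB s + nB (\<lambda>n. (-1) * s n)"
    using assms by (intro Bnorm_tri Bscale)
  moreover have "nB (\<lambda>n. (-1) * s n) = nB s" using Bnorm_scale[OF assms, of "-1"] by simp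
  moreover have "nB (\<lambda>n. s n + (-1) * s n) = 0" using Bnorm_zero[OF B0] by simp
  ultimately show ?thesis by simp
qed

lemma Bdiff: "s \<in> Bs \<Longrightarrow> t \<in> Bs \<Longrightarrow> (\<lambda>n. s n - t n) \<in> Bs"
  using Badd[of s "\<lambda>n. (-1) * t n"] Bscale[of t "-1"] by simp

lemma Bnorm_neg: "s \<in> Bs \<Longrightarrow> nB (\<lambda>n. - s n) = nB s"
  using Bnorm_scale[of s "-1"] by simp

lemma Bnorm_tri_diff: "s \<in> Bs \<Longrightarrow> t \<in> Bs \<Longrightarrow> nB (\<lambda>n. s n - t n) \<le> nB s + nB t"
  using Bnorm_tri[of s "\<lambda>n. - t n"] Bnorm_neg[of t] Bscale[of t "-1"] by simp

lemma Bsum: "finite I \<Longrightarrow> (\<And>i. i \<in> I \<Longrightarrow> f i \<in> Bs) \<Longrightarrow> (\<lambda>n. \<Sum>i\<in>I. f i n) \<in> Bs \<and> nB (\<lambda>n. \<Sum>i\<in>I. f i n) \<le> (\<Sum>i\<in>I. nB (f i))"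
proof (induction I rule: finite_induct)
  case empty
  then show ?case using B0 Bnorm_zero[OF B0] by simp
next
  case (insert x F)
  then have a: "(\<lambda>n. \<Sum>i\<in>F. f i n) \<in> Bs" "nB (\<lambda>n. \<Sum>i\<in>F. f i n) \<le> (\<Sum>i\<in>F. nB (f i))" "f x \<in> Bs" by auto
  have "(\<lambda>n. \<Sum>i\<in>insert x F. f i n) = (\<lambda>n. f x n + (\<Sum>i\<in>F. f i n))" using insert by simp
  then show ?case using Badd[OF a(3) a(1)] Bnorm_tri[OF a(3) a(1)] a(2) insert by simp
qed

definition N where "N = (SOME N. N > 0 \<and> (\<forall>s\<in>Bs. \<forall>m::int. (\<lambda>n. s (n + m)) \<in> Bs \<and> nB (\<lambda>n. s (n + m)) \<le> N * nB s))"

lemma N_prop: "N > 0 \<and> (\<forall>s\<in>Bs. \<forall>m::int. (\<lambda>n. s (n + m)) \<in> Bs \<and> nB (\<lambda>n. s (n + m)) \<le> N * nB s)"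
proof -
  have "\<exists>N. N > 0 \<and> (\<forall>s\<in>Bs. \<forall>m::int. (\<lambda>n. s (n + m)) \<in> Bs \<and> nB (\<lambda>n. s (n + m)) \<le> N * nB s)"
    using adm unfolding admissible_def by blast
  then show ?thesis unfolding N_def by (rule someI_ex)
qed

lemma shift: "s \<in> Bs \<Longrightarrow> (\<lambda>n. s (n + m)) \<in> Bs \<and> nB (\<lambda>n. s (n + m)) \<le> N * nB s"
  using N_prop by blast

lemma chi_in: "indicator {n} \<in> Bs" and chi_pos: "nB (indicator {n}) > 0"
  using adm unfolding admissible_def by auto

definition c0 where "c0 = nB (indicator {0::int})"

lemma c0_pos: "c0 > 0" using chi_pos c0_def by simp

lemma N_ge1: "N \<ge> 1"
  using shift[OF chi_in[of 0], of 0] c0_pos unfolding c0_def by simp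

lemma chi_ge: "nB (indicator {n}) \<ge> c0 / N"
proof -
  have "(\<lambda>j. indicator {n} (j + n)) = (indicator {0} :: int \<Rightarrow> real)"
    by (auto simp: indicator_def)
  then have "c0 \<le> N * nB (indicator {n})" using shift[OF chi_in[of n], of n] c0_def by simp
  then show ?thesis using N_prop by (simp add: field_simps)
qed

lemma chi_le: "nB (indicator {n}) \<le> N * c0"
proof -
  have "(\<lambda>j. indicator {0} (j + (-n))) = (indicator {n} :: int \<Rightarrow> real)"
    by (auto simp: indicator_def)
  then show ?thesis using shift[OF chi_in[of 0], of "-n"] c0_def by simp
qed

definition C1 where "C1 = N / c0"
lemma C1_pos: "C1 > 0" using N_prop c0_pos C1_def by simp

lemma coord: assumes "s \<in> Bs" shows "\<bar>s j\<bar> \<le> C1 * nB s"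
proof -
  have "nB (\<lambda>k. \<bar>s j\<bar> * indicator {j} k) \<le> nB s"
    using Bmono[OF assms, of "\<lambda>k. \<bar>s j\<bar> * indicator {j} k"] by (auto simp: indicator_def)
  then have "\<bar>s j\<bar> * nB (indicator {j}) \<le> nB s" using Bnorm_scale[OF chi_in[of j], of "\<bar>s j\<bar>"] by simp
  moreover have "\<bar>s j\<bar> * (c0 / N) \<le> \<bar>s j\<bar> * nB (indicator {j})"
    using chi_ge[of j] by (intro mult_left_mono) auto
  ultimately have "\<bar>s j\<bar> * (c0 / N) \<le> nB s" by linarith
  then show ?thesis using c0_pos N_prop unfolding C1_def by (simp add: field_simps)
qed

lemma ind_in: "finite I \<Longrightarrow> (indicator I :: int \<Rightarrow> real) \<in> Bs"
proof (induction I rule: finite_induct)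
  case empty then show ?case using B0 by simp
next
  case (insert x F)
  have "(indicator (insert x F) :: int \<Rightarrow> real) = (\<lambda>n. indicator F n + indicator {x} n)"
    using insert by (auto simp: indicator_def)
  then show ?case using Badd[OF insert(3) chi_in] by simp
qed

lemma ind_pos: assumes "finite I" "I \<noteq> {}" shows "nB (indicator I :: int \<Rightarrow> real) > 0"
proof -
  obtain i where "i \<in> I" using assms by auto
  then have "(indicator I :: int \<Rightarrow> real) \<noteq> (\<lambda>n. 0)" by (metis indicator_simps(1) zero_neq_one)
  then show ?thesis using Bnorm_zero[OF ind_in[OF assms(1)]] Bnonneg[OF ind_in[OF assms(1)]] by linarith
qed


lemma nr_tri: "nr m (x + y) \<le> nr m x + nr m y" using nrm by (simp add: is_norm_def)
lemma nr_scale: "nr m (c *\<^sub>R x) = \<bar>c\<bar> * nr m x" using nrm by (simp add: is_norm_def)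
lemma nr_zero_iff: "nr m x = 0 \<longleftrightarrow> x = 0" using nrm by (simp add: is_norm_def)
lemma nr_0[simp]: "nr m 0 = 0" using nr_zero_iff by simp
lemma nr_equiv: "\<exists>a>0. \<exists>b>0. \<forall>x. a * norm x \<le> nr m x \<and> nr m x \<le> b * norm x"
  using nrm by (simp add: equiv_to_norm_def)
lemma nr_nonneg: "0 \<le> nr m x"
  using nr_equiv[of m] by (meson dual_order.trans mult_nonneg_nonneg norm_ge_zero order_less_imp_le)
lemma nr_minus: "nr m (- x) = nr m x" using nr_scale[of m "-1" x] by simp
lemma nr_diff_commute: "nr m (x - y) = nr m (y - x)" using nr_minus[of m "x - y"] by simp
lemma nr_tri_diff: "nr m (x - z) \<le> nr m (x - y) + nr m (y - z)"
  using nr_tri[of m "x - y" "y - z"] by simp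
lemma nr_diff_le: "nr m (x - y) \<le> nr m x + nr m y"
  using nr_tri[of m x "- y"] nr_minus[of m y] by simp
lemma nr_scale_nonneg: "0 \<le> c \<Longrightarrow> nr m (c *\<^sub>R x) = c * nr m x" using nr_scale by simp

abbreviation "Y \<equiv> Y_B Bs nr"
abbreviation ny :: "(int \<Rightarrow> 'a) \<Rightarrow> real" where "ny x \<equiv> nB (\<lambda>n. nr n (x n))"

lemma Y_iff: "x \<in> Y \<longleftrightarrow> (\<lambda>n. nr n (x n)) \<in> Bs" by (simp add: Y_B_def)

lemma Ydom: assumes "y \<in> Y" "0 \<le> c" "\<And>n. nr n (x n) \<le> c * nr n (y n)"
  shows "x \<in> Y \<and> ny x \<le> c * ny y"
proof -
  have "(\<lambda>n. c * nr n (y n)) \<in> Bs" using assms(1) Bscale Y_iff by blast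
  moreover have "\<And>n. \<bar>nr n (x n)\<bar> \<le> \<bar>c * nr n (y n)\<bar>" using assms nr_nonneg
    by (metis abs_of_nonneg mult_nonneg_nonneg)
  ultimately have "(\<lambda>n. nr n (x n)) \<in> Bs \<and> ny x \<le> nB (\<lambda>n. c * nr n (y n))" by (rule Bmono)
  then show ?thesis using Bnorm_scale[of "\<lambda>n. nr n (y n)" c] assms Y_iff by simp
qed

lemma Y0: "(\<lambda>n. 0) \<in> Y" using B0 by (simp add: Y_iff)
lemma ny0: "ny (\<lambda>n. 0) = 0" using Bnorm_zero[OF B0] by simp

lemma Yadd: assumes "x \<in> Y" "y \<in> Y" shows "(\<lambda>n. x n + y n) \<in> Y \<and> ny (\<lambda>n. x n + y n) \<le> ny x + ny y"
proof -
  have s: "(\<lambda>n. nr n (x n) + nr n (y n)) \<in> Bs" using assms Badd Y_iff by blast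
  have "\<And>n. \<bar>nr n (x n + y n)\<bar> \<le> \<bar>nr n (x n) + nr n (y n)\<bar>"
    using nr_tri nr_nonneg by (metis abs_of_nonneg add_nonneg_nonneg)
  then have "(\<lambda>n. nr n (x n + y n)) \<in> Bs \<and> ny (\<lambda>n. x n + y n) \<le> nB (\<lambda>n. nr n (x n) + nr n (y n))"
    using Bmono[OF s, of "\<lambda>n. nr n (x n + y n)"] by blast
  then show ?thesis using Bnorm_tri[of "\<lambda>n. nr n (x n)" "\<lambda>n. nr n (y n)"] assms Y_iff by force
qed

lemma Yscale: assumes "x \<in> Y" shows "(\<lambda>n. c *\<^sub>R x n) \<in> Y \<and> ny (\<lambda>n. c *\<^sub>R x n) = \<bar>c\<bar> * ny x"
  using Bscale[of "\<lambda>n. nr n (x n)" "\<bar>c\<bar>"] Bnorm_scale[of "\<lambda>n. nr n (x n)" "\<bar>c\<bar>"] assms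
  by (simp add: Y_iff nr_scale)

lemma Yneg: assumes "x \<in> Y" shows "(\<lambda>n. - x n) \<in> Y \<and> ny (\<lambda>n. - x n) = ny x"
  using Yscale[OF assms, of "-1"] by simp

lemma Ydiff: assumes "x \<in> Y" "y \<in> Y" shows "(\<lambda>n. x n - y n) \<in> Y \<and> ny (\<lambda>n. x n - y n) \<le> ny x + ny y"
  using Yadd[OF assms(1) Yneg[OF assms(2), THEN conjunct1]] Yneg[OF assms(2)] by simp

lemma ny_nonneg: "x \<in> Y \<Longrightarrow> 0 \<le> ny x" using Bnonneg Y_iff by blast

lemma ny_zero: "x \<in> Y \<Longrightarrow> ny x = 0 \<longleftrightarrow> x = (\<lambda>n. 0)"
proof -
  assume "x \<in> Y"
  then have "ny x = 0 \<longleftrightarrow> (\<lambda>n. nr n (x n)) = (\<lambda>n. 0)" using Bnorm_zero Y_iff by blast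
  also have "\<dots> \<longleftrightarrow> x = (\<lambda>n. 0)" by (auto simp: fun_eq_iff nr_zero_iff)
  finally show ?thesis .
qed

lemma ny_diff_commute: "ny (\<lambda>n. x n - y n) = ny (\<lambda>n. y n - x n)"
  by (simp add: nr_diff_commute)

lemma ny_tri_diff: assumes "x \<in> Y" "y \<in> Y" "z \<in> Y"
  shows "ny (\<lambda>n. x n - z n) \<le> ny (\<lambda>n. x n - y n) + ny (\<lambda>n. y n - z n)"
proof -
  have a: "(\<lambda>n. x n - y n) \<in> Y" "(\<lambda>n. y n - z n) \<in> Y" using Ydiff assms by blast+
  show ?thesis using Yadd[OF a] by (simp add: algebra_simps)
qed

lemma Ycoord: "x \<in> Y \<Longrightarrow> nr j (x j) \<le> C1 * ny x"
  using coord[of "\<lambda>n. nr n (x n)" j] nr_nonneg by (simp add: Y_iff)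

definition delta :: "int \<Rightarrow> 'a \<Rightarrow> int \<Rightarrow> 'a" where "delta m v = (\<lambda>j. if j = m then v else 0)"

lemma delta_Y: "delta m v \<in> Y \<and> ny (delta m v) \<le> N * c0 * nr m v"
proof -
  have e: "(\<lambda>n. nr n (delta m v n)) = (\<lambda>n. nr m v * indicator {m} n)"
    by (auto simp: delta_def fun_eq_iff)
  have "nr m v * nB (indicator {m}) \<le> nr m v * (N * c0)" using chi_le nr_nonneg by (simp add: mult_left_mono)
  then show ?thesis using e Bscale[OF chi_in] Bnorm_scale[OF chi_in, of "nr m v"] nr_nonneg
    by (simp add: Y_iff mult.commute mult.left_commute)
qed

lemma Alin: "linear (A m)" using lin bounded_linear.linear by blast
lemma A_add: "A m (x + y) = A m x + A m y" using Alin linear_add by blast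
lemma A_diff: "A m (x - y) = A m x - A m y" using Alin linear_diff by blast
lemma A_scale: "A m (c *\<^sub>R x) = c *\<^sub>R A m x" using Alin linear_scale by blast
lemma A_0[simp]: "A m 0 = 0" using Alin linear_0 by blast
lemma A_neg: "A m (- x) = - A m x" using Alin linear_neg by blast

abbreviation "T \<equiv> T_B A"
abbreviation "dm \<equiv> dom_T_B Bs nr A"

lemma T_app: "T x n = x n - A (n - 1) (x (n - 1))" by (simp add: T_B_def)

lemma T_add: "T (\<lambda>j. x j + y j) = (\<lambda>j. T x j + T y j)" by (simp add: T_B_def fun_eq_iff A_add)
lemma T_diff: "T (\<lambda>j. x j - y j) = (\<lambda>j. T x j - T y j)" by (simp add: T_B_def fun_eq_iff A_diff)
lemma T_scale: "T (\<lambda>j. c *\<^sub>R x j) = (\<lambda>j. c *\<^sub>R T x j)" by (simp add: T_B_def fun_eq_iff A_scale scaleR_diff_right)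
lemma T_0: "T (\<lambda>j. 0) = (\<lambda>j. 0)" by (simp add: T_B_def fun_eq_iff)

lemma dm_iff: "x \<in> dm \<longleftrightarrow> x \<in> Y \<and> T x \<in> Y" by (simp add: dom_T_B_def)

lemma T_inj: "x \<in> Y \<Longrightarrow> T x \<in> Y \<Longrightarrow> x' \<in> Y \<Longrightarrow> T x' \<in> Y \<Longrightarrow> T x = T x' \<Longrightarrow> x = x'"
  using bij unfolding bij_betw_def inj_on_def by (simp add: dm_iff)

lemma T_inj0: "x \<in> Y \<Longrightarrow> T x = (\<lambda>j. 0) \<Longrightarrow> x = (\<lambda>j. 0)"
  using T_inj[of x "\<lambda>j. 0"] Y0 T_0 by simp

definition G where "G y = the_inv_into dm T y"

lemma G_prop: assumes "y \<in> Y" shows "G y \<in> Y \<and> T (G y) = y"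
proof -
  have "y \<in> T ` dm" using bij assms by (simp add: bij_betw_def)
  then have "G y \<in> dm \<and> T (G y) = y" unfolding G_def
    using bij by (metis bij_betw_def f_the_inv_into_f the_inv_into_into subset_refl)
  then show ?thesis by (simp add: dm_iff)
qed

lemma G_uniq: "x \<in> Y \<Longrightarrow> T x = y \<Longrightarrow> y \<in> Y \<Longrightarrow> G y = x"
  using G_prop T_inj by metis

lemma T_delta: "T (delta m v) = (\<lambda>j. delta m v j - delta (m + 1) (A m v) j)"
  by (auto simp: T_B_def delta_def fun_eq_iff)


lemma G_linear_diff: "y \<in> Y \<Longrightarrow> z \<in> Y \<Longrightarrow> G (\<lambda>j. y j - z j) = (\<lambda>j. G y j - G z j)"
proof -
  assume a: "y \<in> Y" "z \<in> Y"
  show ?thesis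
    apply (rule G_uniq)
    using G_prop[OF a(1)] G_prop[OF a(2)] Ydiff a T_diff by auto
qed




subsection \<open>completeness of Y\<close>

lemma Ydiff_in: "x \<in> Y \<Longrightarrow> y \<in> Y \<Longrightarrow> (\<lambda>n. x n - y n) \<in> Y" using Ydiff by blast


lemma tele_B: assumes "\<And>i. F i \<in> Bs" "\<And>i. nB (\<lambda>j. F (Suc i) j - F i j) \<le> c * (1/2)^i" "m \<le> n"
  shows "nB (\<lambda>j. F n j - F m j) \<le> 2 * c * (1/2)^m - 2 * c * (1/2)^n"
  using assms(3)
proof (induction n rule: dec_induct)
  case base then show ?case using Bnorm_zero[OF B0] by simp
next
  case (step n)
  have "nB (\<lambda>j. F (Suc n) j - F m j) = nB (\<lambda>j. (F (Suc n) j - F n j) + (F n j - F m j))" by simp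
  also have "\<dots> \<le> nB (\<lambda>j. F (Suc n) j - F n j) + nB (\<lambda>j. F n j - F m j)"
    using Bnorm_tri Bdiff assms(1) by blast
  also have "\<dots> \<le> c * (1/2)^n + (2 * c * (1/2)^m - 2 * c * (1/2)^n)" using assms(2) step.IH by (intro add_mono)
  finally show ?case by simp
qed

lemma tele_Y: assumes "\<And>i. F i \<in> Y" "\<And>i. ny (\<lambda>j. F (Suc i) j - F i j) \<le> c * (1/2)^i" "m \<le> n"
  shows "ny (\<lambda>j. F n j - F m j) \<le> 2 * c * (1/2)^m - 2 * c * (1/2)^n"
  using assms(3)
proof (induction n rule: dec_induct)
  case base then show ?case using ny0 by simp
next
  case (step n)
  have "ny (\<lambda>j. F (Suc n) j - F m j) \<le> ny (\<lambda>j. F (Suc n) j - F n j) + ny (\<lambda>j. F n j - F m j)"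
    using ny_tri_diff assms(1) by blast
  also have "\<dots> \<le> c * (1/2)^n + (2 * c * (1/2)^m - 2 * c * (1/2)^n)" using assms(2) step.IH by (intro add_mono)
  finally show ?case by simp
qed

lemma small_pow: assumes "(e::real) > 0" obtains K where "\<And>n. n \<ge> K \<Longrightarrow> 2 * c * (1/2::real)^n < e"
proof -
  have "\<exists>K. (1/2::real)^K < e / (2 * (\<bar>c\<bar> + 1))" using assms by (intro real_arch_pow_inv) auto
  then obtain K where K: "(1/2::real)^K < e / (2 * (\<bar>c\<bar> + 1))" by blast
  have "2 * c * (1/2::real)^n < e" if "n \<ge> K" for n
  proof -
    have "(1/2::real)^n \<le> (1/2)^K" using that by (intro power_decreasing) auto
    then have "(1/2::real)^n < e / (2 * (\<bar>c\<bar> + 1))" using K by linarith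
    then have "2 * (\<bar>c\<bar> + 1) * (1/2::real)^n < e" by (simp add: field_simps)
    moreover have "2 * c * (1/2::real)^n \<le> 2 * (\<bar>c\<bar> + 1) * (1/2::real)^n" by (intro mult_right_mono) auto
    ultimately show ?thesis by linarith
  qed
  then show ?thesis using that by blast
qed

lemma nr_cont: "(\<lambda>n. X n) \<longlonglongrightarrow> l \<Longrightarrow> (\<lambda>n. nr j (X n)) \<longlonglongrightarrow> nr j l"
proof -
  assume X: "X \<longlonglongrightarrow> l"
  obtain a b where ab: "a > 0" "b > 0" "\<And>x. a * norm x \<le> nr j x \<and> nr j x \<le> b * norm x"
    using nr_equiv[of j] by blast
  have lim: "(\<lambda>n. b * norm (X n - l)) \<longlonglongrightarrow> 0"
    using X by (intro tendsto_mult_right_zero) (simp add: tendsto_norm_zero_iff LIM_zero_iff)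
  have le: "norm (nr j (X n) - nr j l) \<le> b * norm (X n - l)" for n
  proof -
    have "nr j (X n) \<le> nr j l + nr j (X n - l)" using nr_tri[of j l "X n - l"] by simp
    moreover have "nr j l \<le> nr j (X n) + nr j (X n - l)" using nr_tri[of j "X n" "l - X n"] nr_diff_commute[of j "X n" l] by simp
    ultimately have "\<bar>nr j (X n) - nr j l\<bar> \<le> nr j (X n - l)" by linarith
    then show ?thesis using ab(3)[of "X n - l"] by simp
  qed
  have "(\<lambda>n. nr j (X n) - nr j l) \<longlonglongrightarrow> 0"
    by (rule Lim_null_comparison[OF always_eventually lim]) (use le in blast)
  then show ?thesis by (simp add: LIM_zero_iff)
qed

lemma coord_conv: assumes "\<And>n. F n \<in> Y" "x \<in> Y" "(\<lambda>n. ny (\<lambda>j. F n j - x j)) \<longlonglongrightarrow> 0"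
  shows "(\<lambda>n. F n j) \<longlonglongrightarrow> x j"
proof -
  obtain a b where ab: "a > 0" "b > 0" "\<And>x. a * norm x \<le> nr j x \<and> nr j x \<le> b * norm x"
    using nr_equiv[of j] by blast
  have le: "norm (F n j - x j) \<le> (C1 / a) * ny (\<lambda>j. F n j - x j)" for n
  proof -
    have "nr j (F n j - x j) \<le> C1 * ny (\<lambda>j. F n j - x j)" using Ycoord Ydiff assms by blast
    moreover have "a * norm (F n j - x j) \<le> nr j (F n j - x j)" using ab by blast
    ultimately have "a * norm (F n j - x j) \<le> C1 * ny (\<lambda>j. F n j - x j)" by linarith
    then have "norm (F n j - x j) \<le> C1 * ny (\<lambda>j. F n j - x j) / a" using ab(1) by (simp add: pos_le_divide_eq mult.commute)
    then show ?thesis by simp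
  qed
  have lim: "(\<lambda>n. (C1 / a) * ny (\<lambda>j. F n j - x j)) \<longlonglongrightarrow> 0"
    using assms(3) by (rule tendsto_mult_right_zero)
  have "(\<lambda>n. F n j - x j) \<longlonglongrightarrow> 0"
    by (rule Lim_null_comparison[OF always_eventually lim]) (use le in blast)
  then show ?thesis by (simp add: LIM_zero_iff)
qed


lemma B_complete: "(\<forall>k. F k \<in> Bs) \<Longrightarrow> (\<forall>e>0. \<exists>K. \<forall>k\<ge>K. \<forall>l\<ge>K. nB (\<lambda>n. F k n - F l n) < e)
   \<Longrightarrow> \<exists>s\<in>Bs. (\<lambda>k. nB (\<lambda>n. F k n - s n)) \<longlonglongrightarrow> 0"
  using bsp unfolding banach_seq_space_def by blast

lemma coord_norm: "\<exists>c>0. \<forall>x. x \<in> Y \<longrightarrow> norm (x j) \<le> c * ny x"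
proof -
  obtain a b where ab: "a > 0" "b > 0" "\<And>x. a * norm x \<le> nr j x \<and> nr j x \<le> b * norm x"
    using nr_equiv[of j] by blast
  have "norm (x j) \<le> (C1 / a) * ny x" if "x \<in> Y" for x
  proof -
    have "a * norm (x j) \<le> C1 * ny x" using ab(3)[of "x j"] Ycoord[OF that, of j] by linarith
    then have "norm (x j) \<le> C1 * ny x / a" using ab(1) by (simp add: pos_le_divide_eq mult.commute)
    then show ?thesis by simp
  qed
  then show ?thesis using ab C1_pos by (intro exI[of _ "C1 / a"]) auto
qed

lemma Y_complete:
  assumes fY: "\<And>p. f p \<in> Y"
    and cau: "\<And>e. e > 0 \<Longrightarrow> \<exists>Nc. \<forall>p\<ge>Nc. \<forall>q\<ge>Nc. ny (\<lambda>j. f p j - f q j) < e"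
  shows "\<exists>g\<in>Y. (\<lambda>p. ny (\<lambda>j. f p j - g j)) \<longlonglongrightarrow> 0"
proof -
  have "\<forall>i. \<exists>Nc. \<forall>p\<ge>Nc. \<forall>q\<ge>Nc. ny (\<lambda>j. f p j - f q j) < (1/2::real)^i" using cau by simp
  then obtain Nf where Nf: "\<And>i p q. p \<ge> Nf i \<Longrightarrow> q \<ge> Nf i \<Longrightarrow> ny (\<lambda>j. f p j - f q j) < (1/2::real)^i"
    by metis
  define \<phi> where "\<phi> i = (\<Sum>l\<le>i. Nf l) + i" for i
  have \<phi>ge: "Nf i \<le> \<phi> i'" if "i \<le> i'" for i i'
  proof -
    have "Nf i \<le> (\<Sum>l\<le>i'. Nf l)" using that by (intro member_le_sum) auto
    then show ?thesis unfolding \<phi>_def by simp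
  qed
  have "\<phi> n < \<phi> (Suc n)" for n unfolding \<phi>_def by (simp only: sum.atMost_Suc)
  then have \<phi>sm: "strict_mono \<phi>" by (intro strict_mono_Suc_iff[THEN iffD2] allI)
  define h where "h i = (\<lambda>j. nr j (f (\<phi> (Suc i)) j - f (\<phi> i) j))" for i
  have hB: "h i \<in> Bs" for i unfolding h_def using Ydiff_in[OF fY fY] by (simp add: Y_iff)
  have hn: "nB (h i) \<le> 1 * (1/2)^i" for i
    unfolding h_def using Nf[of i "\<phi> (Suc i)" "\<phi> i"] \<phi>ge[of i "Suc i"] \<phi>ge[of i i] by force
  have hpos: "0 \<le> h i j" for i j unfolding h_def by (rule nr_nonneg)
  define H where "H n = (\<lambda>j. \<Sum>i<n. h i j)" for n
  have HSuc: "H (Suc n) = (\<lambda>j. H n j + h n j)" for n by (simp add: H_def)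
  have HB: "H n \<in> Bs" for n
  proof (induction n)
    case 0 then show ?case using B0 by (simp add: H_def)
  next
    case (Suc n) then show ?case unfolding HSuc by (rule Badd[OF _ hB])
  qed
  have Hdiff: "(\<lambda>j. H (Suc n) j - H n j) = h n" for n by (simp add: HSuc)
  have Htele: "nB (\<lambda>j. H n j - H m j) \<le> 2 * 1 * (1/2)^m - 2 * 1 * (1/2)^n" if "m \<le> n" for m n
    using tele_B[of H 1 m n] HB hn Hdiff that by simp
  have "\<exists>Hl\<in>Bs. (\<lambda>k. nB (\<lambda>n. H k n - Hl n)) \<longlonglongrightarrow> 0"
  proof -
    have "\<forall>e>0. \<exists>Kc. \<forall>k\<ge>Kc. \<forall>l\<ge>Kc. nB (\<lambda>n. H k n - H l n) < e"
    proof (intro allI impI)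
      fix e :: real assume "e > 0"
      then obtain Kc where Kc: "\<And>n. n \<ge> Kc \<Longrightarrow> 2 * 1 * (1/2::real)^n < e" using small_pow[of e 1] by blast
      have "nB (\<lambda>n. H k n - H l n) < e" if "k \<ge> Kc" "l \<ge> Kc" for k l
      proof (cases "l \<le> k")
        case True
        have "0 \<le> (1/2::real)^k" by simp
        then show ?thesis using Htele[OF True] Kc[OF that(2)] by linarith
      next
        case False
        have "0 \<le> (1/2::real)^l" by simp
        then have "nB (\<lambda>n. H l n - H k n) < e" using Htele[of k l] Kc[OF that(1)] False by linarith
        moreover have "nB (\<lambda>n. H k n - H l n) = nB (\<lambda>n. H l n - H k n)"
          using Bnorm_neg[OF Bdiff[OF HB HB, of l k]] by simp
        ultimately show ?thesis by simp
      qed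
      then show "\<exists>Kc. \<forall>k\<ge>Kc. \<forall>l\<ge>Kc. nB (\<lambda>n. H k n - H l n) < e" by blast
    qed
    then show ?thesis using B_complete[of H] HB by blast
  qed
  then obtain Hl where HlB: "Hl \<in> Bs" and Hlim: "(\<lambda>k. nB (\<lambda>n. H k n - Hl n)) \<longlonglongrightarrow> 0" by blast
  have Hcoord: "(\<lambda>k. H k j) \<longlonglongrightarrow> Hl j" for j
  proof -
    have le: "norm (H k j - Hl j) \<le> C1 * nB (\<lambda>n. H k n - Hl n)" for k
      using coord[OF Bdiff[OF HB HlB], of k j] by simp
    have lim: "(\<lambda>k. C1 * nB (\<lambda>n. H k n - Hl n)) \<longlonglongrightarrow> 0" using Hlim by (rule tendsto_mult_right_zero)
    have "(\<lambda>k. H k j - Hl j) \<longlonglongrightarrow> 0"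
      by (rule Lim_null_comparison[OF always_eventually lim]) (use le in blast)
    then show ?thesis by (simp add: LIM_zero_iff)
  qed
  have Hle: "H k j \<le> Hl j" for k j
  proof -
    have "incseq (\<lambda>k. H k j)" by (rule incseq_SucI) (simp add: HSuc hpos)
    then show ?thesis using incseq_le Hcoord by blast
  qed
  have "\<exists>gj. (\<lambda>p. f p j) \<longlonglongrightarrow> gj" for j
  proof -
    obtain c where c: "c > 0" "\<And>x. x \<in> Y \<Longrightarrow> norm (x j) \<le> c * ny x" using coord_norm[of j] by blast
    have "Cauchy (\<lambda>p. f p j)"
    proof (rule CauchyI)
      fix e :: real assume "e > 0"
      then obtain Nc where Nc: "\<forall>p\<ge>Nc. \<forall>q\<ge>Nc. ny (\<lambda>j. f p j - f q j) < e / c" using cau[of "e / c"] c \<open>e > 0\<close> by auto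
      have "norm (f p j - f q j) < e" if "p \<ge> Nc" "q \<ge> Nc" for p q
      proof -
        have "norm (f p j - f q j) \<le> c * ny (\<lambda>j. f p j - f q j)" using c(2)[OF Ydiff_in[OF fY fY]] by simp
        also have "\<dots> < c * (e / c)" using Nc that c by (intro mult_strict_left_mono) auto
        finally show ?thesis using c by simp
      qed
      then show "\<exists>M. \<forall>m\<ge>M. \<forall>n\<ge>M. norm (f m j - f n j) < e" by blast
    qed
    then show ?thesis using Cauchy_convergent_iff convergent_def by blast
  qed
  then obtain g where glim: "\<And>j. (\<lambda>p. f p j) \<longlonglongrightarrow> g j" by metis
  have gsub: "(\<lambda>i. f (\<phi> i) j) \<longlonglongrightarrow> g j" for j
    using LIMSEQ_subseq_LIMSEQ[OF glim \<phi>sm] by (simp add: comp_def)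
  have tele: "nr j (f (\<phi> n) j - f (\<phi> p) j) \<le> H n j - H p j" if "p \<le> n" for p n j
    using that
  proof (induction n rule: dec_induct)
    case base then show ?case by simp
  next
    case (step n)
    have "nr j (f (\<phi> (Suc n)) j - f (\<phi> p) j) \<le> nr j (f (\<phi> (Suc n)) j - f (\<phi> n) j) + nr j (f (\<phi> n) j - f (\<phi> p) j)"
      by (rule nr_tri_diff)
    also have "\<dots> \<le> h n j + (H n j - H p j)" using step.IH by (simp add: h_def)
    finally show ?case by (simp add: HSuc)
  qed
  have gle: "nr j (g j - f (\<phi> p) j) \<le> Hl j - H p j" for p j
  proof -
    have "(\<lambda>n. nr j (f (\<phi> n) j - f (\<phi> p) j)) \<longlonglongrightarrow> nr j (g j - f (\<phi> p) j)"
      by (rule nr_cont) (intro tendsto_diff gsub tendsto_const)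
    moreover have "\<forall>n\<ge>p. nr j (f (\<phi> n) j - f (\<phi> p) j) \<le> Hl j - H p j"
      using tele Hle by (smt (verit))
    ultimately show ?thesis by (intro LIMSEQ_le_const2) auto
  qed
  have gdiff: "(\<lambda>j. g j - f (\<phi> p) j) \<in> Y \<and> ny (\<lambda>j. g j - f (\<phi> p) j) \<le> nB (\<lambda>j. Hl j - H p j)" for p
  proof -
    have "(\<lambda>j. nr j (g j - f (\<phi> p) j)) \<in> Bs \<and> ny (\<lambda>j. g j - f (\<phi> p) j) \<le> nB (\<lambda>j. Hl j - H p j)"
    proof (rule Bmono[OF Bdiff[OF HlB HB]])
      fix j show "\<bar>nr j (g j - f (\<phi> p) j)\<bar> \<le> \<bar>Hl j - H p j\<bar>"
        using gle[of j p] nr_nonneg[of j] by simp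
    qed
    then show ?thesis by (simp add: Y_iff)
  qed
  have gY: "g \<in> Y"
  proof -
    have "(\<lambda>j. (g j - f (\<phi> 0) j) + f (\<phi> 0) j) \<in> Y" using Yadd[OF gdiff[THEN conjunct1] fY] by blast
    then show ?thesis by simp
  qed
  have Hl_neg: "nB (\<lambda>j. Hl j - H p j) = nB (\<lambda>n. H p n - Hl n)" for p
    using Bnorm_neg[OF Bdiff[OF HB HlB, of p]] by simp
  have "(\<lambda>p. ny (\<lambda>j. f p j - g j)) \<longlonglongrightarrow> 0"
  proof (rule LIMSEQ_I)
    fix r :: real assume r: "0 < r"
    obtain i0 where i0: "(1/2::real)^i0 < r / 2" using real_arch_pow_inv[of "r/2" "1/2"] r by auto
    obtain P0 where P0: "\<forall>n\<ge>P0. norm (nB (\<lambda>m. H n m - Hl m) - 0) < r / 2" using LIMSEQ_D[OF Hlim, of "r/2"] r by auto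
    define i' where "i' = max i0 P0"
    have "norm (ny (\<lambda>j. f p j - g j) - 0) < r" if "p \<ge> Nf i0" for p
    proof -
      have "ny (\<lambda>j. f p j - g j) \<le> ny (\<lambda>j. f p j - f (\<phi> i') j) + ny (\<lambda>j. f (\<phi> i') j - g j)"
        by (rule ny_tri_diff[OF fY fY gY])
      also have "ny (\<lambda>j. f (\<phi> i') j - g j) = ny (\<lambda>j. g j - f (\<phi> i') j)" by (rule ny_diff_commute)
      also have "\<dots> \<le> nB (\<lambda>n. H i' n - Hl n)" using gdiff[of i'] Hl_neg[of i'] by simp
      also have "\<dots> < r / 2" using P0[rule_format, of i'] i'_def Bnonneg[OF Bdiff[OF HB HlB, of i']] by simp
      also have "ny (\<lambda>j. f p j - f (\<phi> i') j) < (1/2)^i0" using Nf[of i0 p "\<phi> i'"] that \<phi>ge[of i0 i'] i'_def by simp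
      finally have "ny (\<lambda>j. f p j - g j) < r" using i0 by simp
      moreover have "0 \<le> ny (\<lambda>j. f p j - g j)" by (rule ny_nonneg[OF Ydiff_in[OF fY gY]])
      ultimately show ?thesis by simp
    qed
    then show "\<exists>no. \<forall>p\<ge>no. norm (ny (\<lambda>j. f p j - g j) - 0) < r" by blast
  qed
  then show ?thesis using gY by blast
qed


lemma closed_graph:
  assumes SY: "\<And>n. S n \<in> Y" and xY: "x \<in> Y" and yY: "y \<in> Y"
    and Sx: "(\<lambda>n. ny (\<lambda>j. S n j - x j)) \<longlonglongrightarrow> 0"
    and TSY: "\<And>n. T (S n) \<in> Y" and TSy: "(\<lambda>n. ny (\<lambda>j. T (S n) j - y j)) \<longlonglongrightarrow> 0"
  shows "T x = y"
proof
  fix j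
  have "(\<lambda>n. S n j) \<longlonglongrightarrow> x j" "(\<lambda>n. S n (j - 1)) \<longlonglongrightarrow> x (j - 1)"
    using coord_conv[OF SY xY Sx] by auto
  then have "(\<lambda>n. S n j - A (j - 1) (S n (j - 1))) \<longlonglongrightarrow> x j - A (j - 1) (x (j - 1))"
    using lin by (intro tendsto_diff bounded_linear.tendsto[of "A (j - 1)"]) auto
  then have "(\<lambda>n. T (S n) j) \<longlonglongrightarrow> T x j" by (simp add: T_B_def)
  moreover have "(\<lambda>n. T (S n) j) \<longlonglongrightarrow> y j" using coord_conv[OF TSY yY TSy] by simp
  ultimately show "T x j = y j" using LIMSEQ_unique by blast
qed

lemma G_scale: "y \<in> Y \<Longrightarrow> G (\<lambda>j. c *\<^sub>R y j) = (\<lambda>j. c *\<^sub>R G y j)"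
  by (rule G_uniq) (use Yscale G_prop T_scale in auto)

lemma G_zero: "G (\<lambda>j. 0) = (\<lambda>j. 0)"
  by (rule G_uniq) (use Y0 T_0 in auto)

lemma iteration:
  assumes C: "C \<ge> 0"
    and approx: "\<And>z. z \<in> Y \<Longrightarrow> \<exists>w\<in>Y. ny (G w) \<le> C * ny z \<and> ny (\<lambda>j. z j - w j) \<le> ny z / 2"
    and yY: "y \<in> Y"
  shows "ny (G y) \<le> 2 * C * ny y"
proof -
  have "\<forall>z. \<exists>w. z \<in> Y \<longrightarrow> w \<in> Y \<and> ny (G w) \<le> C * ny z \<and> ny (\<lambda>j. z j - w j) \<le> ny z / 2"
    using approx by blast
  then obtain W where W: "\<And>z. z \<in> Y \<Longrightarrow> W z \<in> Y \<and> ny (G (W z)) \<le> C * ny z \<and> ny (\<lambda>j. z j - W z j) \<le> ny z / 2"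
    by metis
  define ys where "ys = rec_nat y (\<lambda>_ z. \<lambda>j. z j - W z j)"
  have ys0: "ys 0 = y" and ysS: "ys (Suc i) = (\<lambda>j. ys i j - W (ys i) j)" for i by (simp_all add: ys_def)
  have ysY: "ys i \<in> Y" for i
  proof (induction i)
    case 0 then show ?case using yY ys0 by simp
  next
    case (Suc i) show ?case unfolding ysS by (rule Ydiff_in[OF Suc W[OF Suc, THEN conjunct1]])
  qed
  have ysn: "ny (ys i) \<le> ny y * (1/2)^i" for i
  proof (induction i)
    case 0 then show ?case using ys0 by simp
  next
    case (Suc i)
    have "ny (ys (Suc i)) \<le> ny (ys i) / 2" unfolding ysS using W[OF ysY[of i]] by simp
    then show ?case using Suc by simp
  qed
  define zs where "zs i = W (ys i)" for i
  have zsY: "zs i \<in> Y" for i unfolding zs_def using W[OF ysY[of i]] by simp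
  have Gzs: "ny (G (zs i)) \<le> (C * ny y) * (1/2)^i" for i
  proof -
    have "ny (G (zs i)) \<le> C * ny (ys i)" unfolding zs_def using W[OF ysY[of i]] by simp
    also have "\<dots> \<le> C * (ny y * (1/2)^i)" using ysn C by (intro mult_left_mono) auto
    finally show ?thesis by simp
  qed
  define S where "S n = (\<lambda>j. \<Sum>i<n. G (zs i) j)" for n
  have SSuc: "S (Suc n) = (\<lambda>j. S n j + G (zs n) j)" for n by (simp add: S_def)
  have S0: "S 0 = (\<lambda>j. 0)" by (simp add: S_def)
  have SY: "S n \<in> Y" for n
  proof (induction n)
    case 0 then show ?case using Y0 S0 by simp
  next
    case (Suc n) then show ?case unfolding SSuc using Yadd[OF Suc G_prop[OF zsY, THEN conjunct1]] by blast
  qed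
  have Sdiff: "ny (\<lambda>j. S (Suc n) j - S n j) \<le> (C * ny y) * (1/2)^n" for n
    unfolding SSuc using Gzs by simp
  have TS: "T (S n) = (\<lambda>j. y j - ys n j)" for n
  proof (induction n)
    case 0 then show ?case using S0 T_0 ys0 by simp
  next
    case (Suc n)
    have "T (S (Suc n)) = (\<lambda>j. T (S n) j + T (G (zs n)) j)" unfolding SSuc by (rule T_add)
    also have "\<dots> = (\<lambda>j. (y j - ys n j) + zs n j)" using Suc G_prop[OF zsY] by simp
    also have "\<dots> = (\<lambda>j. y j - ys (Suc n) j)" unfolding ysS zs_def by (simp add: algebra_simps)
    finally show ?case .
  qed
  have tele: "ny (\<lambda>j. S n j - S m j) \<le> 2 * (C * ny y) * (1/2)^m - 2 * (C * ny y) * (1/2)^n" if "m \<le> n" for m n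
    using tele_Y[of S "C * ny y" m n] SY Sdiff that by blast
  have "\<exists>x\<in>Y. (\<lambda>p. ny (\<lambda>j. S p j - x j)) \<longlonglongrightarrow> 0"
  proof (rule Y_complete[OF SY])
    fix e :: real assume "e > 0"
    then obtain Kc where Kc: "\<And>n. n \<ge> Kc \<Longrightarrow> 2 * (C * ny y) * (1/2::real)^n < e" using small_pow[of e "C * ny y"] by blast
    have cy: "0 \<le> C * ny y" using C ny_nonneg[OF yY] by simp
    have "ny (\<lambda>j. S p j - S q j) < e" if "p \<ge> Kc" "q \<ge> Kc" for p q
    proof (cases "q \<le> p")
      case True
      have "0 \<le> 2 * (C * ny y) * (1/2::real)^p" using cy by simp
      then show ?thesis using tele[OF True] Kc[OF that(2)] by linarith
    next
      case False
      have "0 \<le> 2 * (C * ny y) * (1/2::real)^q" using cy by simp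
      then have "ny (\<lambda>j. S q j - S p j) < e" using tele[of p q] Kc[OF that(1)] False by linarith
      then show ?thesis using ny_diff_commute[of "S p" "S q"] by simp
    qed
    then show "\<exists>Nc. \<forall>p\<ge>Nc. \<forall>q\<ge>Nc. ny (\<lambda>j. S p j - S q j) < e" by blast
  qed
  then obtain x where xY: "x \<in> Y" and Sx: "(\<lambda>p. ny (\<lambda>j. S p j - x j)) \<longlonglongrightarrow> 0" by blast
  have TSY: "T (S n) \<in> Y" for n unfolding TS by (rule Ydiff_in[OF yY ysY])
  have TSy: "(\<lambda>n. ny (\<lambda>j. T (S n) j - y j)) \<longlonglongrightarrow> 0"
  proof -
    have e: "ny (\<lambda>j. T (S n) j - y j) = ny (ys n)" for n
      unfolding TS using Yneg[OF ysY[of n]] by simp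
    have lim: "(\<lambda>n. ny y * (1/2::real)^n) \<longlonglongrightarrow> 0"
      by (intro tendsto_mult_right_zero LIMSEQ_power_zero) auto
    have le: "norm (ny (ys n)) \<le> ny y * (1/2)^n" for n using ysn ny_nonneg[OF ysY[of n]] by simp
    have "(\<lambda>n. ny (ys n)) \<longlonglongrightarrow> 0"
      by (rule Lim_null_comparison[OF always_eventually lim]) (use le in blast)
    then show ?thesis unfolding e .
  qed
  have Tx: "T x = y" by (rule closed_graph[OF SY xY yY Sx TSY TSy])
  then have Gy: "G y = x" using G_uniq xY yY by blast
  have bound: "ny x \<le> 2 * (C * ny y) + ny (\<lambda>j. S n j - x j)" for n
  proof -
    have "ny x = ny (\<lambda>j. S n j + (x j - S n j))" by simp
    also have "\<dots> \<le> ny (S n) + ny (\<lambda>j. x j - S n j)" using Yadd[OF SY Ydiff_in[OF xY SY]] by blast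
    also have "ny (S n) \<le> 2 * (C * ny y)"
    proof -
      have "ny (\<lambda>j. S n j - S 0 j) \<le> 2 * (C * ny y) * (1/2)^0 - 2 * (C * ny y) * (1/2)^n" using tele by blast
      moreover have "0 \<le> 2 * (C * ny y) * (1/2::real)^n" using C ny_nonneg[OF yY] by simp
      ultimately show ?thesis using S0 by simp
    qed
    finally show ?thesis by (simp add: ny_diff_commute)
  qed
  have "(\<lambda>n. 2 * (C * ny y) + ny (\<lambda>j. S n j - x j)) \<longlonglongrightarrow> 2 * (C * ny y) + 0"
    by (intro tendsto_add tendsto_const Sx)
  then have "ny x \<le> 2 * (C * ny y) + 0" by (rule LIMSEQ_le_const) (use bound in blast)
  then show ?thesis using Gy by simp
qed


subsection \<open>Baire\<close>

definition dY where "dY x y = (if x \<in> Y \<and> y \<in> Y then ny (\<lambda>j. x j - y j) else 0)"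

lemma dY_metric: "Metric_space Y dY"
proof
  show "0 \<le> dY x y" for x y unfolding dY_def using ny_nonneg[OF Ydiff_in] by auto
  show "dY x y = dY y x" for x y unfolding dY_def using ny_diff_commute[of x y] by auto
  show "x \<in> Y \<Longrightarrow> y \<in> Y \<Longrightarrow> dY x y = 0 \<longleftrightarrow> x = y" for x y
  proof -
    assume a: "x \<in> Y" "y \<in> Y"
    then have "dY x y = 0 \<longleftrightarrow> (\<lambda>j. x j - y j) = (\<lambda>j. 0)" unfolding dY_def using ny_zero[OF Ydiff_in[OF a]] by simp
    also have "\<dots> \<longleftrightarrow> x = y" by (auto simp: fun_eq_iff)
    finally show ?thesis .
  qed
  show "x \<in> Y \<Longrightarrow> y \<in> Y \<Longrightarrow> z \<in> Y \<Longrightarrow> dY x z \<le> dY x y + dY y z" for x y z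
    unfolding dY_def using ny_tri_diff[of x y z] by simp
qed

lemma bounded_inverse: "\<exists>K\<ge>1. \<forall>x. x \<in> Y \<longrightarrow> T x \<in> Y \<longrightarrow> ny x \<le> K * ny (T x)"
proof -
  interpret Mt: Metric_space Y dY by (rule dY_metric)
  have mc: "Mt.mcomplete"
    unfolding Mt.mcomplete_def
  proof (intro allI impI)
    fix \<sigma> assume "Mt.MCauchy \<sigma>"
    then have sY: "\<And>n. \<sigma> n \<in> Y" and sc: "\<And>e. e > 0 \<Longrightarrow> \<exists>N. \<forall>n n'. N \<le> n \<longrightarrow> N \<le> n' \<longrightarrow> dY (\<sigma> n) (\<sigma> n') < e"
      unfolding Mt.MCauchy_def by auto
    have "\<exists>g\<in>Y. (\<lambda>p. ny (\<lambda>j. \<sigma> p j - g j)) \<longlonglongrightarrow> 0"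
    proof (rule Y_complete[OF sY])
      fix e :: real assume "e > 0"
      then obtain N where "\<forall>n n'. N \<le> n \<longrightarrow> N \<le> n' \<longrightarrow> dY (\<sigma> n) (\<sigma> n') < e" using sc by blast
      then show "\<exists>Nc. \<forall>p\<ge>Nc. \<forall>q\<ge>Nc. ny (\<lambda>j. \<sigma> p j - \<sigma> q j) < e"
        using sY unfolding dY_def by auto
    qed
    then obtain g where gY: "g \<in> Y" and gl: "(\<lambda>p. ny (\<lambda>j. \<sigma> p j - g j)) \<longlonglongrightarrow> 0" by blast
    have "limitin Mt.mtopology \<sigma> g sequentially"
      unfolding Mt.limit_metric_sequentially
    proof (intro conjI gY allI impI)
      fix e :: real assume "e > 0"
      then obtain N where "\<forall>n\<ge>N. norm (ny (\<lambda>j. \<sigma> n j - g j) - 0) < e" using LIMSEQ_D[OF gl] by blast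
      then have "\<forall>n\<ge>N. ny (\<lambda>j. \<sigma> n j - g j) < e" by (auto simp: abs_less_iff)
      then show "\<exists>N. \<forall>n\<ge>N. \<sigma> n \<in> Y \<and> dY (\<sigma> n) g < e" using sY gY unfolding dY_def by auto
    qed
    then show "\<exists>x. limitin Mt.mtopology \<sigma> x sequentially" by blast
  qed
  define F where "F k = {y \<in> Y. ny (G y) \<le> real k}" for k :: nat
  have FY: "F k \<subseteq> Y" for k unfolding F_def by auto
  have "\<exists>k. Mt.mtopology interior_of (Mt.mtopology closure_of F k) \<noteq> {}"
  proof (rule ccontr)
    assume "\<not> ?thesis"
    then have emp: "\<And>k. Mt.mtopology interior_of (Mt.mtopology closure_of F k) = {}" by blast
    have "Mt.mtopology interior_of \<Union>(range (\<lambda>k. Mt.mtopology closure_of F k)) = {}"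
      by (rule Mt.metric_Baire_category_alt[OF mc]) (use emp in auto)
    moreover have "\<Union>(range (\<lambda>k. Mt.mtopology closure_of F k)) = Y"
    proof
      show "\<Union>(range (\<lambda>k. Mt.mtopology closure_of F k)) \<subseteq> Y"
        using closure_of_subset_topspace[of Mt.mtopology] by auto
      show "Y \<subseteq> \<Union>(range (\<lambda>k. Mt.mtopology closure_of F k))"
      proof
        fix y assume yY: "y \<in> Y"
        obtain k :: nat where "ny (G y) \<le> real k" using real_arch_simple by blast
        then have "y \<in> F k" using yY unfolding F_def by auto
        then have "y \<in> Mt.mtopology closure_of F k" using closure_of_subset[of "F k" Mt.mtopology] FY by auto
        then show "y \<in> \<Union>(range (\<lambda>k. Mt.mtopology closure_of F k))" by blast
      qed
    qed
    ultimately have "Mt.mtopology interior_of Y = {}" by simp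
    moreover have "Mt.mtopology interior_of Y = Y"
      using interior_of_topspace[of Mt.mtopology] by simp
    ultimately show False using Y0 by auto
  qed
  then obtain k y0 where "y0 \<in> Mt.mtopology interior_of (Mt.mtopology closure_of F k)" by blast
  then obtain r where y0Y: "y0 \<in> Y" and r: "r > 0" and ball: "Mt.mball y0 r \<subseteq> Mt.mtopology closure_of F k"
    unfolding Mt.in_interior_of_mball by blast
  have clos: "\<exists>z'\<in>F k. z' \<in> Y \<and> dY z z' < e" if "z \<in> Y" "dY y0 z < r" "e > 0" for z e
  proof -
    have "z \<in> Mt.mball y0 r" using that y0Y by simp
    then have "z \<in> Mt.mtopology closure_of F k" using ball by blast
    then show ?thesis unfolding Mt.metric_closure_of using that(3) by auto
  qed
  have approx1: "\<exists>w\<in>Y. ny (G w) \<le> 2 * real k \<and> ny (\<lambda>j. z j - w j) < e"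
    if zY: "z \<in> Y" and zr: "ny z < r" and e: "e > 0" for z e
  proof -
    have yzY: "(\<lambda>j. y0 j + z j) \<in> Y" using Yadd[OF y0Y zY] by blast
    have "dY y0 (\<lambda>j. y0 j + z j) = ny (\<lambda>j. - z j)" unfolding dY_def using y0Y yzY by simp
    then have "dY y0 (\<lambda>j. y0 j + z j) < r" using Yneg[OF zY] zr by simp
    then obtain z1 where z1: "z1 \<in> F k" "dY (\<lambda>j. y0 j + z j) z1 < e / 2" using clos[OF yzY _, of "e/2"] e by auto
    have "dY y0 y0 < r" using r Mt.zero[OF y0Y y0Y] by simp
    then obtain z2 where z2: "z2 \<in> F k" "dY y0 z2 < e / 2" using clos[OF y0Y _, of "e/2"] e by auto
    have z1Y: "z1 \<in> Y" and z2Y: "z2 \<in> Y" using z1 z2 FY by auto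
    define w where "w = (\<lambda>j. z1 j - z2 j)"
    have wY: "w \<in> Y" unfolding w_def by (rule Ydiff_in[OF z1Y z2Y])
    have "G w = (\<lambda>j. G z1 j - G z2 j)" unfolding w_def by (rule G_linear_diff[OF z1Y z2Y])
    then have "ny (G w) \<le> ny (G z1) + ny (G z2)" using Ydiff[OF G_prop[OF z1Y, THEN conjunct1] G_prop[OF z2Y, THEN conjunct1]] by simp
    also have "\<dots> \<le> 2 * real k" using z1 z2 unfolding F_def by simp
    finally have gw: "ny (G w) \<le> 2 * real k" .
    have "ny (\<lambda>j. z j - w j) = ny (\<lambda>j. (y0 j + z j - z1 j) - (y0 j - z2 j))" unfolding w_def by (simp add: algebra_simps)
    also have "\<dots> \<le> ny (\<lambda>j. y0 j + z j - z1 j) + ny (\<lambda>j. y0 j - z2 j)"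
      using Ydiff[OF Ydiff_in[OF yzY z1Y] Ydiff_in[OF y0Y z2Y]] by simp
    also have "\<dots> < e / 2 + e / 2" using z1(2) z2(2) yzY z1Y y0Y z2Y unfolding dY_def by simp
    finally show ?thesis using wY gw by auto
  qed
  define C where "C = 4 * real k / r"
  have C0: "C \<ge> 0" unfolding C_def using r by simp
  have approx2: "\<exists>w\<in>Y. ny (G w) \<le> C * ny z \<and> ny (\<lambda>j. z j - w j) \<le> ny z / 2" if zY: "z \<in> Y" for z
  proof (cases "ny z = 0")
    case True
    then have "z = (\<lambda>j. 0)" using ny_zero[OF zY] by simp
    then show ?thesis using Y0 G_zero ny0 True by (intro bexI[of _ "\<lambda>j. 0"]) auto
  next
    case False
    then have nz: "ny z > 0" using ny_nonneg[OF zY] by simp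
    define t where "t = r / (2 * ny z)"
    have t: "t > 0" unfolding t_def using r nz by simp
    have tzY: "(\<lambda>j. t *\<^sub>R z j) \<in> Y" and tzn: "ny (\<lambda>j. t *\<^sub>R z j) = t * ny z" using Yscale[OF zY, of t] t by auto
    have "t * ny z = r / 2" unfolding t_def using nz by simp
    then have "ny (\<lambda>j. t *\<^sub>R z j) < r" using tzn r by simp
    then obtain w' where w'Y: "w' \<in> Y" and w'1: "ny (G w') \<le> 2 * real k" and w'2: "ny (\<lambda>j. t *\<^sub>R z j - w' j) < r / 4"
      using approx1[OF tzY _, of "r/4"] r by auto
    define w where "w = (\<lambda>j. (1/t) *\<^sub>R w' j)"
    have wY: "w \<in> Y" unfolding w_def using Yscale[OF w'Y] by blast
    have "G w = (\<lambda>j. (1/t) *\<^sub>R G w' j)" unfolding w_def by (rule G_scale[OF w'Y])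
    then have "ny (G w) = (1/t) * ny (G w')" using Yscale[OF G_prop[OF w'Y, THEN conjunct1], of "1/t"] t by simp
    also have "\<dots> \<le> (1/t) * (2 * real k)" using w'1 t by (intro mult_left_mono) auto
    also have "\<dots> = C * ny z" unfolding C_def t_def using r nz by (simp add: field_simps)
    finally have g1: "ny (G w) \<le> C * ny z" .
    have ezw: "z j - w j = (1/t) *\<^sub>R (t *\<^sub>R z j - w' j)" for j unfolding w_def using t
      by (simp add: scaleR_diff_right)
    have "ny (\<lambda>j. z j - w j) = (1/t) * ny (\<lambda>j. t *\<^sub>R z j - w' j)"
      using Yscale[OF Ydiff_in[OF tzY w'Y], of "1/t"] t by (simp only: ezw) simp
    also have "\<dots> \<le> (1/t) * (r / 4)" using w'2 t by (intro mult_left_mono) auto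
    also have "\<dots> = ny z / 2" unfolding t_def using r nz by (simp add: field_simps)
    finally show ?thesis using wY g1 by auto
  qed
  have main: "ny (G y) \<le> 2 * C * ny y" if "y \<in> Y" for y
    by (rule iteration[OF C0 approx2 that])
  show ?thesis
  proof (intro exI[of _ "max 1 (2 * C)"] conjI allI impI)
    show "1 \<le> max 1 (2 * C)" by simp
    fix x assume xY: "x \<in> Y" and TxY: "T x \<in> Y"
    have "x = G (T x)" using G_uniq[OF xY refl TxY] by simp
    then have "ny x \<le> 2 * C * ny (T x)" using main[OF TxY] by simp
    also have "\<dots> \<le> max 1 (2 * C) * ny (T x)" using ny_nonneg[OF TxY] by (intro mult_right_mono) auto
    finally show "ny x \<le> max 1 (2 * C) * ny (T x)" .
  qed
qed


definition K where "K = (SOME K. K \<ge> 1 \<and> (\<forall>x. x \<in> Y \<longrightarrow> T x \<in> Y \<longrightarrow> ny x \<le> K * ny (T x)))"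

lemma K_prop: "K \<ge> 1 \<and> (\<forall>x. x \<in> Y \<longrightarrow> T x \<in> Y \<longrightarrow> ny x \<le> K * ny (T x))"
  unfolding K_def using bounded_inverse by (rule someI_ex)

lemma K_bound: "x \<in> Y \<Longrightarrow> T x \<in> Y \<Longrightarrow> ny x \<le> K * ny (T x)" using K_prop by blast

definition M0 where "M0 = K * N * N"
definition M where "M = 1 + M0"

lemma M0_ge1: "M0 \<ge> 1"
proof -
  have "1 \<le> K * N" using mult_mono[of 1 K 1 N] K_prop N_ge1 by simp
  then have "1 * 1 \<le> (K * N) * N" using mult_mono[of 1 "K * N" 1 N] N_ge1 by simp
  then show ?thesis unfolding M0_def by simp
qed
lemma M_ge: "M \<ge> M0" "M \<ge> 1" using M0_ge1 by (auto simp: M_def)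

subsection \<open>Perron lemma\<close>

lemma perron:
  assumes "x \<in> Y" "T x \<in> Y" "finite I" "I \<noteq> {}" "0 \<le> \<gamma>" "0 \<le> \<beta>" "\<mu> > 0"
    and lo: "\<And>j. j \<in> I \<Longrightarrow> \<gamma> \<le> \<mu> * nr j (x j)"
    and up: "\<And>j. nr j (T x j) \<le> \<beta> * indicator I (j + s)"
  shows "\<gamma> \<le> \<mu> * K * N * \<beta>"
proof -
  let ?c = "indicator I :: int \<Rightarrow> real"
  have cI: "?c \<in> Bs" using ind_in[OF assms(3)] .
  have cpos: "nB ?c > 0" using ind_pos assms by blast
  have xs: "(\<lambda>n. nr n (x n)) \<in> Bs" using assms(1) Y_iff by blast
  have "nB (\<lambda>j. (\<gamma> / \<mu>) * ?c j) \<le> ny x"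
  proof -
    have "\<bar>(\<gamma> / \<mu>) * ?c j\<bar> \<le> \<bar>nr j (x j)\<bar>" for j
    proof (cases "j \<in> I")
      case True then show ?thesis using lo[OF True] assms nr_nonneg by (simp add: field_simps)
    next
      case False then show ?thesis using nr_nonneg by simp
    qed
    then show ?thesis using Bmono[OF xs, of "\<lambda>j. (\<gamma> / \<mu>) * ?c j"] by blast
  qed
  then have l: "(\<gamma> / \<mu>) * nB ?c \<le> ny x" using Bnorm_scale[OF cI, of "\<gamma> / \<mu>"] assms by simp
  have sh: "(\<lambda>j. ?c (j + s)) \<in> Bs" "nB (\<lambda>j. ?c (j + s)) \<le> N * nB ?c" using shift[OF cI] by auto
  have "ny (T x) \<le> nB (\<lambda>j. \<beta> * ?c (j + s))"
  proof -
    have "\<bar>nr j (T x j)\<bar> \<le> \<bar>\<beta> * ?c (j + s)\<bar>" for j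
      using up[of j] nr_nonneg assms(6) by (simp add: abs_of_nonneg)
    then show ?thesis using Bmono[OF Bscale[OF sh(1), of \<beta>], of "\<lambda>j. nr j (T x j)"] by blast
  qed
  also have "\<dots> = \<beta> * nB (\<lambda>j. ?c (j + s))" using Bnorm_scale[OF sh(1)] assms by simp
  also have "\<dots> \<le> \<beta> * (N * nB ?c)" using sh(2) assms(6) by (simp add: mult_left_mono)
  finally have u: "ny (T x) \<le> \<beta> * (N * nB ?c)" .
  have "K * ny (T x) \<le> K * (\<beta> * (N * nB ?c))" using u K_prop by (intro mult_left_mono) auto
  then have "(\<gamma> / \<mu>) * nB ?c \<le> K * (\<beta> * (N * nB ?c))"
    using l K_bound[OF assms(1,2)] by linarith
  then have "(\<gamma> / \<mu>) * nB ?c \<le> (K * \<beta> * N) * nB ?c" by (simp add: algebra_simps)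
  then have "\<gamma> / \<mu> \<le> K * \<beta> * N" using cpos mult_right_le_imp_le by blast
  then have "\<gamma> \<le> K * \<beta> * N * \<mu>" using assms(7) pos_divide_le_eq by blast
  then show ?thesis by (simp add: algebra_simps)
qed

definition sol where "sol m v = G (delta m v)"

lemma sol_Y: "sol m v \<in> Y" "T (sol m v) = delta m v"
  using G_prop[of "delta m v"] delta_Y sol_def by auto

lemma sol_uniq: "x \<in> Y \<Longrightarrow> T x = delta m v \<Longrightarrow> sol m v = x"
  unfolding sol_def using G_uniq delta_Y by blast

lemma sol_bound: "nr j (sol m v j) \<le> M0 * nr m v"
proof -
  have "nr j (sol m v j) \<le> C1 * ny (sol m v)" using Ycoord sol_Y by blast
  also have "\<dots> \<le> C1 * (K * ny (delta m v))"
    using K_bound[OF sol_Y(1)] sol_Y(2) delta_Y C1_pos by (simp add: mult_left_mono)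
  also have "\<dots> \<le> C1 * (K * (N * c0 * nr m v))"
    using delta_Y C1_pos K_prop by (simp add: mult_left_mono)
  also have "\<dots> = M0 * nr m v" unfolding M0_def C1_def using c0_pos by (simp add: field_simps)
  finally show ?thesis .
qed

lemma sol_traj: assumes "j \<noteq> m" shows "sol m v j = A (j - 1) (sol m v (j - 1))"
proof -
  have "T (sol m v) j = delta m v j" using sol_Y(2) by simp
  then show ?thesis using assms by (simp add: T_B_def delta_def)
qed

definition P where "P m v = sol m v m"
definition U where "U m w = (\<lambda>j. delta m w j - sol m w j)"

lemma trunc_stable: assumes "m \<le> k"
  shows "sol k (sol m v k) = (\<lambda>j. if k \<le> j then sol m v j else 0)"
proof (rule sol_uniq)
  show "(\<lambda>j. if k \<le> j then sol m v j else 0) \<in> Y"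
    by (rule Ydom[OF sol_Y(1), of 1, THEN conjunct1]) (auto simp: nr_nonneg)
  show "T (\<lambda>j. if k \<le> j then sol m v j else 0) = delta k (sol m v k)"
  proof
    fix j
    show "T (\<lambda>j. if k \<le> j then sol m v j else 0) j = delta k (sol m v k) j"
      using sol_traj[of j m v] assms by (auto simp: T_B_def delta_def)
  qed
qed

lemma P_stable: "m \<le> k \<Longrightarrow> P k (sol m v k) = sol m v k"
  using trunc_stable[of m k v] unfolding P_def by (metis order_refl)

lemma P_idem: "P m (P m v) = P m v" using P_stable[of m m v] P_def by simp

lemma stable_mono: "m \<le> k \<Longrightarrow> k \<le> j \<Longrightarrow> nr j (sol m v j) \<le> M0 * nr k (sol m v k)"
  using sol_bound[of j k "sol m v k"] trunc_stable[of m k v] by (metis order.trans)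

lemma sol_add: "sol m (x + y) = (\<lambda>j. sol m x j + sol m y j)"
  apply (rule sol_uniq)
  using Yadd[OF sol_Y(1) sol_Y(1)] apply blast
  by (simp add: T_add sol_Y delta_def fun_eq_iff)

lemma sol_scale: "sol m (c *\<^sub>R x) = (\<lambda>j. c *\<^sub>R sol m x j)"
  apply (rule sol_uniq)
  using Yscale[OF sol_Y(1)] apply blast
  by (simp add: T_scale sol_Y delta_def fun_eq_iff)

lemma P_bl: "bounded_linear (P m)"
proof -
  obtain a b where ab: "a > 0" "b > 0" "\<And>x. a * norm x \<le> nr m x \<and> nr m x \<le> b * norm x"
    using nr_equiv[of m] by blast
  show ?thesis
  proof (rule bounded_linear_intro[where K = "M0 * b / a"])
    show "P m (x + y) = P m x + P m y" for x y by (simp add: P_def sol_add)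
    show "P m (r *\<^sub>R x) = r *\<^sub>R P m x" for r x by (simp add: P_def sol_scale)
    show "norm (P m x) \<le> norm x * (M0 * b / a)" for x
    proof -
      have "a * norm (P m x) \<le> nr m (P m x)" using ab by blast
      also have "\<dots> \<le> M0 * nr m x" unfolding P_def by (rule sol_bound)
      also have "\<dots> \<le> M0 * (b * norm x)" using ab M0_ge1 by (simp add: mult_left_mono)
      finally show ?thesis using ab by (simp add: field_simps)
    qed
  qed
qed

lemma P_inv: "A m (P m v) = P (m + 1) (A m v)"
proof -
  have "sol (m + 1) (A m v) = (\<lambda>j. sol m v j - delta m v j)"
  proof (rule sol_uniq)
    show "(\<lambda>j. sol m v j - delta m v j) \<in> Y" using Ydiff sol_Y delta_Y by blast
    show "T (\<lambda>j. sol m v j - delta m v j) = delta (m + 1) (A m v)"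
      by (simp add: T_diff sol_Y T_delta fun_eq_iff)
  qed
  then show ?thesis using sol_traj[of "m+1" m v] unfolding P_def by (simp add: delta_def)
qed

lemma U_Y: "U m w \<in> Y" unfolding U_def using Ydiff delta_Y sol_Y by blast
lemma T_U: "T (U m w) = (\<lambda>j. - delta (m + 1) (A m w) j)"
  unfolding U_def by (simp add: T_diff sol_Y T_delta fun_eq_iff)
lemma U_traj: assumes "j \<le> m" shows "U m w j = A (j - 1) (U m w (j - 1))"
proof -
  have "T (U m w) j = - delta (m + 1) (A m w) j" using T_U by simp
  then show ?thesis using assms by (simp add: T_B_def delta_def)
qed
lemma U_m: "U m w m = w - P m w" by (simp add: U_def delta_def P_def)

lemma U_trunc_sol: assumes "k \<le> m"
  shows "sol k (U m w k) = (\<lambda>j. delta k (U m w k) j - (if j \<le> k then U m w j else 0))"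
proof (rule sol_uniq)
  have z: "(\<lambda>j. if j \<le> k then U m w j else 0) \<in> Y"
    by (rule Ydom[OF U_Y, of 1, THEN conjunct1]) (auto simp: nr_nonneg)
  then show "(\<lambda>j. delta k (U m w k) j - (if j \<le> k then U m w j else 0)) \<in> Y"
    using Ydiff delta_Y by blast
  have "T (\<lambda>j. if j \<le> k then U m w j else 0) = (\<lambda>j. - delta (k + 1) (A k (U m w k)) j)"
  proof
    fix j
    show "T (\<lambda>j. if j \<le> k then U m w j else 0) j = - delta (k + 1) (A k (U m w k)) j"
      using U_traj[of j m w] assms by (auto simp: T_B_def delta_def)
  qed
  then show "T (\<lambda>j. delta k (U m w k) j - (if j \<le> k then U m w j else 0)) = delta k (U m w k)"
    by (simp add: T_diff T_delta fun_eq_iff)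
qed

lemma U_trunc: "k \<le> m \<Longrightarrow> U k (U m w k) = (\<lambda>j. if j \<le> k then U m w j else 0)"
  using U_trunc_sol[of k m w] by (simp add: U_def fun_eq_iff)

lemma P_U: "k \<le> m \<Longrightarrow> P k (U m w k) = 0"
  using U_trunc_sol[of k m w] by (simp add: P_def delta_def)

lemma P_Q: "P m (v - P m v) = 0" using P_U[of m m v] U_m by simp

lemma U_bound: "nr j (U m w j) \<le> M * nr m w"
proof -
  have "nr j (U m w j) \<le> nr j (delta m w j) + nr j (sol m w j)"
    unfolding U_def by (rule nr_diff_le)
  also have "\<dots> \<le> nr m w + M0 * nr m w" using sol_bound[of j m w] nr_nonneg[of m w]
    by (auto simp: delta_def)
  finally show ?thesis by (simp add: M_def algebra_simps)
qed

lemma unstable_mono: "j \<le> k \<Longrightarrow> k \<le> m \<Longrightarrow> nr j (U m w j) \<le> M * nr k (U m w k)"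
  using U_bound[of j k "U m w k"] U_trunc[of k m w] by simp

lemma A_ker: "P m w = 0 \<Longrightarrow> P (m + 1) (A m w) = 0" using P_inv[of m w] by simp

lemma A_ker_inj: "P m w = 0 \<Longrightarrow> A m w = 0 \<Longrightarrow> w = 0"
proof -
  assume a: "P m w = 0" "A m w = 0"
  have "T (U m w) = (\<lambda>j. 0)" using T_U[of m w] a(2) by (simp add: delta_def fun_eq_iff)
  then have "U m w = (\<lambda>j. 0)" using T_inj0[OF U_Y] by blast
  then have "U m w m = 0" by simp
  then show "w = 0" using U_m[of m w] a(1) by simp
qed

lemma A_surj: assumes w: "P (m + 1) w = 0" shows "A m (U (m + 1) w m) = w" "P m (U (m + 1) w m) = 0"
proof -
  have "U (m + 1) w (m + 1) = A m (U (m + 1) w m)" using U_traj[of "m+1" "m+1" w] by simp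
  moreover have "U (m + 1) w (m + 1) = w" using U_m[of "m+1" w] w by simp
  ultimately show "A m (U (m + 1) w m) = w" by simp
  show "P m (U (m + 1) w m) = 0" using P_U[of m "m+1" w] by simp
qed

lemma A_bij: "bij_betw (A m) {x. P m x = 0} {x. P (m + 1) x = 0}"
proof (rule bij_betw_imageI)
  show "inj_on (A m) {x. P m x = 0}"
  proof (rule inj_onI)
    fix x y assume "x \<in> {x. P m x = 0}" "y \<in> {x. P m x = 0}" "A m x = A m y"
    then have "P m (x - y) = 0" "A m (x - y) = 0"
      using linear_diff[OF bounded_linear.linear[OF P_bl[of m]]] by (simp_all add: A_diff)
    then show "x = y" using A_ker_inj[of m "x - y"] by simp
  qed
  show "A m ` {x. P m x = 0} = {x. P (m + 1) x = 0}"
  proof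
    show "A m ` {x. P m x = 0} \<subseteq> {x. P (m + 1) x = 0}"
    proof
      fix y assume "y \<in> A m ` {x. P m x = 0}"
      then obtain x where "P m x = 0" "y = A m x" by blast
      then show "y \<in> {x. P (m + 1) x = 0}" using A_ker[of m x] by simp
    qed
    show "{x. P (m + 1) x = 0} \<subseteq> A m ` {x. P m x = 0}"
    proof
      fix w assume "w \<in> {x. P (m + 1) x = 0}"
      then have w: "P (m + 1) w = 0" by simp
      show "w \<in> A m ` {x. P m x = 0}" using A_surj[OF w]
        by (metis (mono_tags, lifting) image_eqI mem_Collect_eq)
    qed
  qed
qed


lemma cocycle_traj:
  "(\<forall>j. m < j \<and> j \<le> m + int k \<longrightarrow> u j = A (j - 1) (u (j - 1))) \<Longrightarrow> cocycle A m k (u m) = u (m + int k)"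
proof (induction k)
  case 0 then show ?case by simp
next
  case (Suc k)
  then have "cocycle A m k (u m) = u (m + int k)" by auto
  moreover have "u (m + int k + 1) = A (m + int k) (u (m + int k))"
    using Suc.prems[rule_format, of "m + int k + 1"] by simp
  moreover have e: "m + int (Suc k) = m + int k + 1" by simp
  ultimately show ?case unfolding e cocycle.simps comp_def by simp
qed

lemma evol_traj: assumes "m \<le> n" "\<forall>j. m < j \<and> j \<le> n \<longrightarrow> u j = A (j - 1) (u (j - 1))"
  shows "evol A n m (u m) = u n"
proof -
  have "n = m + int (nat (n - m))" using assms by simp
  then show ?thesis unfolding evol_def using cocycle_traj[of m "nat (n - m)" u] assms by metis
qed

lemma cocycle_ker: "P n x = 0 \<Longrightarrow> P (n + int k) (cocycle A n k x) = 0"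
proof (induction k)
  case 0 then show ?case by simp
next
  case (Suc k)
  have e: "n + int (Suc k) = n + int k + 1" by simp
  show ?case unfolding e cocycle.simps comp_def by (rule A_ker[OF Suc.IH[OF Suc.prems]])
qed

lemma cocycle_inj: "inj_on (cocycle A n k) {y. P n y = 0}"
proof (induction k)
  case 0 then show ?case by simp
next
  case (Suc k)
  have "inj_on (A (n + int k)) {y. P (n + int k) y = 0}"
    using A_bij bij_betw_imp_inj_on by blast
  moreover have "cocycle A n k ` {y. P n y = 0} \<subseteq> {y. P (n + int k) y = 0}" using cocycle_ker by blast
  ultimately have "inj_on (A (n + int k)) (cocycle A n k ` {y. P n y = 0})" using inj_on_subset by blast
  then show ?case using Suc comp_inj_on by (metis cocycle.simps(2))
qed

lemma stable_evol: "m \<le> n \<Longrightarrow> evol A n m (P m x) = sol m x n"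
  unfolding P_def by (rule evol_traj) (auto intro: sol_traj)

lemma unstable_inv: assumes "n \<le> m"
  shows "the_inv_into {y. P n y = 0} (evol A m n) (x - P m x) = U m (x - P m x) n"
proof (rule the_inv_into_f_eq)
  show "inj_on (evol A m n) {y. P n y = 0}" unfolding evol_def by (rule cocycle_inj)
  have "evol A m n (U m (x - P m x) n) = U m (x - P m x) m"
    using assms by (intro evol_traj) (auto intro!: U_traj)
  also have "\<dots> = x - P m x" using U_m P_Q by simp
  finally show "evol A m n (U m (x - P m x) n) = x - P m x" .
  show "U m (x - P m x) n \<in> {y. P n y = 0}" using P_U assms by simp
qed

lemma stable_decay:
  assumes "m \<le> k" "L > 0"
  shows "real L * nr (k + 2 * int L) (sol m v (k + 2 * int L)) \<le> M0 * K * N * (M0 * nr k (sol m v k))"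
proof -
  define u where "u = (\<lambda>j. if k \<le> j then sol m v j else 0)"
  define f where "f = (\<lambda>j. min (max (j - k) 0) (int L))"
  define x where "x = (\<lambda>j. of_int (f j) *\<^sub>R u j)"
  have uY: "u \<in> Y" unfolding u_def by (rule Ydom[OF sol_Y(1), of 1, THEN conjunct1]) (auto simp: nr_nonneg)
  have xY: "x \<in> Y"
  proof -
    have "\<bar>real_of_int (f j)\<bar> \<le> real L" for j unfolding f_def by linarith
    then have "nr j (x j) \<le> real L * nr j (u j)" for j
      unfolding x_def nr_scale using nr_nonneg by (intro mult_right_mono) auto
    then show ?thesis by (rule Ydom[OF uY, of "real L", THEN conjunct1, rotated]) simp
  qed
  have Tx: "T x j = (if k < j \<and> j \<le> k + int L then u j else 0)" for j
  proof -
    have "T x j = of_int (f j) *\<^sub>R u j - of_int (f (j - 1)) *\<^sub>R A (j - 1) (u (j - 1))"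
      by (simp add: T_B_def x_def A_scale)
    also have "\<dots> = (if k < j \<and> j \<le> k + int L then u j else 0)"
    proof (cases "k < j")
      case True
      then have e1: "A (j - 1) (u (j - 1)) = u j" using sol_traj[of j m v] assms unfolding u_def by auto
      have e2: "f j - f (j - 1) = (if j \<le> k + int L then 1 else 0)" using True unfolding f_def by auto
      have "of_int (f j) *\<^sub>R u j - of_int (f (j - 1)) *\<^sub>R A (j - 1) (u (j - 1)) = of_int (f j - f (j - 1)) *\<^sub>R u j"
        unfolding e1 by (simp add: scaleR_diff_left)
      then show ?thesis using e2 True by simp
    next
      case False
      then have "u (j - 1) = 0" "of_int (f j) *\<^sub>R u j = 0" by (auto simp: u_def f_def)
      then show ?thesis using False by simp
    qed
    finally show ?thesis .
  qed
  have TxY: "T x \<in> Y"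
    by (rule Ydom[OF uY, of 1, THEN conjunct1]) (auto simp: Tx nr_nonneg)
  let ?a = "\<lambda>j. nr j (sol m v j)"
  have "real L * ?a (k + 2 * int L) \<le> M0 * K * N * (M0 * ?a k)"
  proof (rule perron[OF xY TxY, of "{k + int L<..k + 2 * int L}" _ _ _ "int L"])
    show "finite {k + int L<..k + 2 * int L}" by simp
    show "{k + int L<..k + 2 * int L} \<noteq> {}" using assms by auto
    show "0 \<le> real L * ?a (k + 2 * int L)" using nr_nonneg by simp
    show "0 \<le> M0 * ?a k" using nr_nonneg M0_ge1 by simp
    show "0 < M0" using M0_ge1 by simp
    fix j
    show "j \<in> {k + int L<..k + 2 * int L} \<Longrightarrow> real L * ?a (k + 2 * int L) \<le> M0 * nr j (x j)"
    proof -
      assume j: "j \<in> {k + int L<..k + 2 * int L}"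
      then have "f j = int L" "u j = sol m v j" using assms by (auto simp: f_def u_def)
      then have "nr j (x j) = real L * ?a j" by (simp add: x_def nr_scale)
      moreover have "?a (k + 2 * int L) \<le> M0 * ?a j" using stable_mono[of m j "k + 2 * int L" v] j assms by auto
      ultimately show ?thesis by (simp add: mult_left_mono algebra_simps)
    qed
    show "nr j (T x j) \<le> M0 * ?a k * indicator {k + int L<..k + 2 * int L} (j + int L)"
    proof (cases "k < j \<and> j \<le> k + int L")
      case True
      then have "nr j (T x j) = ?a j" by (simp add: Tx u_def)
      also have "\<dots> \<le> M0 * ?a k" using stable_mono[of m k j v] True assms by auto
      finally show ?thesis using True by (simp add: indicator_def)
    next
      case False
      have "T x j = 0" unfolding Tx[of j] using False by (rule if_not_P)
      then show ?thesis using M0_ge1 M_ge nr_nonneg by (auto simp: indicator_def intro!: mult_nonneg_nonneg)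
    qed
  qed
  then show ?thesis by simp
qed

lemma unstable_decay:
  assumes "k \<le> m" "L > 0"
  shows "real L * nr (k - 2 * int L) (U m w (k - 2 * int L)) \<le> M * K * N * (M * nr k (U m w k))"
proof -
  define u where "u = (\<lambda>j. if j \<le> k then U m w j else 0)"
  define f where "f = (\<lambda>j. min (max (k - j) 0) (int L))"
  define x where "x = (\<lambda>j. of_int (f j) *\<^sub>R u j)"
  have uY: "u \<in> Y" unfolding u_def by (rule Ydom[OF U_Y, of 1, THEN conjunct1]) (auto simp: nr_nonneg)
  have xY: "x \<in> Y"
  proof -
    have "\<bar>real_of_int (f j)\<bar> \<le> real L" for j unfolding f_def by linarith
    then have "nr j (x j) \<le> real L * nr j (u j)" for j
      unfolding x_def nr_scale using nr_nonneg by (intro mult_right_mono) auto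
    then show ?thesis by (rule Ydom[OF uY, of "real L", THEN conjunct1, rotated]) simp
  qed
  have Tx: "T x j = (if k - int L < j \<and> j \<le> k then - u j else 0)" for j
  proof -
    have "T x j = of_int (f j) *\<^sub>R u j - of_int (f (j - 1)) *\<^sub>R A (j - 1) (u (j - 1))"
      by (simp add: T_B_def x_def A_scale)
    also have "\<dots> = (if k - int L < j \<and> j \<le> k then - u j else 0)"
    proof (cases "j \<le> k")
      case True
      then have e1: "A (j - 1) (u (j - 1)) = u j" using U_traj[of j m w] assms unfolding u_def by auto
      have e2: "f j - f (j - 1) = (if k - int L < j then -1 else 0)" using True unfolding f_def by auto
      have "of_int (f j) *\<^sub>R u j - of_int (f (j - 1)) *\<^sub>R A (j - 1) (u (j - 1)) = of_int (f j - f (j - 1)) *\<^sub>R u j"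
        unfolding e1 by (simp add: scaleR_diff_left)
      then show ?thesis using e2 True by simp
    next
      case False
      then have "u j = 0" "of_int (f (j - 1)) *\<^sub>R A (j - 1) (u (j - 1)) = 0" by (auto simp: u_def f_def)
      then show ?thesis using False by simp
    qed
    finally show ?thesis .
  qed
  have TxY: "T x \<in> Y"
    by (rule Ydom[OF uY, of 1, THEN conjunct1]) (auto simp: Tx nr_nonneg nr_minus)
  let ?a = "\<lambda>j. nr j (U m w j)"
  have "real L * ?a (k - 2 * int L) \<le> M * K * N * (M * ?a k)"
  proof (rule perron[OF xY TxY, of "{k - 2 * int L<..k - int L}" _ _ _ "- int L"])
    show "finite {k - 2 * int L<..k - int L}" by simp
    show "{k - 2 * int L<..k - int L} \<noteq> {}" using assms by auto
    show "0 \<le> real L * ?a (k - 2 * int L)" using nr_nonneg by simp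
    show "0 \<le> M * ?a k" using nr_nonneg M_ge by simp
    show "0 < M" using M_ge by simp
    fix j
    show "j \<in> {k - 2 * int L<..k - int L} \<Longrightarrow> real L * ?a (k - 2 * int L) \<le> M * nr j (x j)"
    proof -
      assume j: "j \<in> {k - 2 * int L<..k - int L}"
      then have "f j = int L" "u j = U m w j" using assms by (auto simp: f_def u_def)
      then have "nr j (x j) = real L * ?a j" by (simp add: x_def nr_scale)
      moreover have "?a (k - 2 * int L) \<le> M * ?a j" using unstable_mono[of "k - 2 * int L" j m w] j assms by auto
      ultimately show ?thesis by (simp add: mult_left_mono algebra_simps)
    qed
    show "nr j (T x j) \<le> M * ?a k * indicator {k - 2 * int L<..k - int L} (j + - int L)"
    proof (cases "k - int L < j \<and> j \<le> k")
      case True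
      then have "nr j (T x j) = ?a j" by (simp add: Tx u_def nr_minus)
      also have "\<dots> \<le> M * ?a k" using unstable_mono[of j k m w] True assms by auto
      finally show ?thesis using True by (simp add: indicator_def)
    next
      case False
      have "T x j = 0" unfolding Tx[of j] using False by (rule if_not_P)
      then show ?thesis using M0_ge1 M_ge nr_nonneg by (auto simp: indicator_def intro!: mult_nonneg_nonneg)
    qed
  qed
  then show ?thesis by simp
qed


lemma halving: fixes g :: "nat \<Rightarrow> real" assumes "\<And>q. g (Suc q) \<le> g q / 2" shows "g q \<le> g 0 / 2 ^ q"
proof (induction q)
  case 0 then show ?case by simp
next
  case (Suc q)
  have "g (Suc q) \<le> g q / 2" by (rule assms)
  also have "\<dots> \<le> (g 0 / 2 ^ q) / 2" using Suc by simp
  finally show ?case by simp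
qed

lemma pow_bound: assumes "T2 > (0::nat)"
  shows "(1/2::real) ^ (d div T2) \<le> 2 * (root T2 (1/2)) ^ d"
proof -
  define la where "la = root T2 (1/2)"
  have la: "0 < la" "la < 1" "la ^ T2 = 1/2"
    using assms by (auto simp: la_def real_root_gt_zero)
  have "la ^ d = la ^ (T2 * (d div T2) + d mod T2)" by simp
  also have "\<dots> = (la ^ T2) ^ (d div T2) * la ^ (d mod T2)"
    by (simp only: power_add power_mult)
  also have "\<dots> = (1/2) ^ (d div T2) * la ^ (d mod T2)" unfolding la(3) ..
  finally have e: "la ^ d = (1/2) ^ (d div T2) * la ^ (d mod T2)" .
  have "1/2 \<le> la ^ (d mod T2)"
    using power_decreasing[of "d mod T2" T2 la] la assms by simp
  then have "(1/2::real) ^ (d div T2) * (1/2) \<le> (1/2) ^ (d div T2) * la ^ (d mod T2)"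
    by (intro mult_left_mono) auto
  then show ?thesis using e unfolding la_def[symmetric] by simp
qed

definition L where "L = nat \<lceil>2 * K * N * M * M\<rceil> + 1"

lemma L_prop: "L > 0" "2 * K * N * M * M \<le> real L"
  unfolding L_def by (auto) linarith

lemma KNMM_nonneg: "0 \<le> K * N * M * M" using K_prop N_ge1 M_ge by simp

lemma stable_half: assumes "m \<le> k"
  shows "nr (k + 2 * int L) (sol m v (k + 2 * int L)) \<le> nr k (sol m v k) / 2"
proof -
  let ?a = "\<lambda>j. nr j (sol m v j)"
  have "real L * ?a (k + 2 * int L) \<le> M0 * K * N * (M0 * ?a k)" using stable_decay assms L_prop by blast
  also have "\<dots> \<le> (K * N * M * M) * ?a k"
  proof -
    have "M0 * M0 \<le> M * M" using M_ge M0_ge1 by (intro mult_mono) auto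
    then have "K * N * (M0 * M0) \<le> K * N * (M * M)" using K_prop N_ge1 by (intro mult_left_mono) auto
    from mult_right_mono[OF this nr_nonneg[of k "sol m v k"]] show ?thesis by (simp add: algebra_simps)
  qed
  also have "\<dots> \<le> (real L / 2) * ?a k" using L_prop nr_nonneg[of k "sol m v k"] by (intro mult_right_mono) auto
  finally have "real L * ?a (k + 2 * int L) \<le> real L * (?a k / 2)" by simp
  then show ?thesis using L_prop by simp
qed

lemma unstable_half: assumes "k \<le> m"
  shows "nr (k - 2 * int L) (U m w (k - 2 * int L)) \<le> nr k (U m w k) / 2"
proof -
  let ?a = "\<lambda>j. nr j (U m w j)"
  have "real L * ?a (k - 2 * int L) \<le> M * K * N * (M * ?a k)" using unstable_decay assms L_prop by blast
  also have "\<dots> = (K * N * M * M) * ?a k" by (simp add: algebra_simps)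
  also have "\<dots> \<le> (real L / 2) * ?a k" using L_prop nr_nonneg[of k "U m w k"] by (intro mult_right_mono) auto
  finally have "real L * ?a (k - 2 * int L) \<le> real L * (?a k / 2)" by simp
  then show ?thesis using L_prop by simp
qed

definition T2 where "T2 = 2 * L"
definition la where "la = root T2 (1/2)"

lemma T2_pos: "T2 > 0" using L_prop T2_def by simp
lemma la_prop: "0 < la" "la < 1" using T2_pos by (auto simp: la_def real_root_gt_zero)

lemma stable_est: assumes "m \<le> n"
  shows "nr n (evol A n m (P m x)) \<le> (2 * M * M) * la ^ nat (n - m) * nr m x"
proof -
  let ?a = "\<lambda>j. nr j (sol m x j)"
  define d where "d = nat (n - m)"
  define q where "q = d div T2"
  define g where "g = (\<lambda>i. ?a (m + int (T2 * i)))"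
  have "g (Suc i) \<le> g i / 2" for i
  proof -
    have e: "m + int (T2 * Suc i) = (m + int (T2 * i)) + 2 * int L" by (simp add: T2_def algebra_simps)
    show ?thesis apply (simp only: g_def e) by (rule stable_half) simp
  qed
  then have gq: "g q \<le> g 0 / 2 ^ q" by (rule halving)
  have "T2 * q \<le> d" unfolding q_def by simp
  then have kn: "m + int (T2 * q) \<le> n" using assms d_def by linarith
  have "nr n (evol A n m (P m x)) = ?a n" using stable_evol assms by simp
  also have "\<dots> \<le> M0 * g q" unfolding g_def using stable_mono[of m "m + int (T2 * q)" n x] kn by simp
  also have "\<dots> \<le> M0 * (g 0 / 2 ^ q)" using gq M0_ge1 by (intro mult_left_mono) auto
  also have "g 0 \<le> M0 * nr m x" unfolding g_def using sol_bound[of m m x] by simp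
  then have "M0 * (g 0 / 2 ^ q) \<le> M0 * (M0 * nr m x / 2 ^ q)" using M0_ge1 by (intro mult_left_mono divide_right_mono) auto
  also have "\<dots> = (M0 * M0 * nr m x) * (1/2) ^ q" by (simp add: power_one_over)
  also have "\<dots> \<le> (M0 * M0 * nr m x) * (2 * la ^ d)"
    using pow_bound[OF T2_pos, of d] nr_nonneg[of m x] M0_ge1 unfolding q_def la_def by (intro mult_left_mono) auto
  also have "\<dots> \<le> (M * M * nr m x) * (2 * la ^ d)"
  proof -
    have "M0 * M0 \<le> M * M" using M_ge M0_ge1 by (intro mult_mono) auto
    then show ?thesis using nr_nonneg[of m x] la_prop by (intro mult_right_mono) (auto simp: mult_right_mono)
  qed
  finally show ?thesis unfolding d_def by (simp add: algebra_simps)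
qed

lemma unstable_est: assumes "n \<le> m"
  shows "nr n (the_inv_into {y. P n y = 0} (evol A m n) (x - P m x)) \<le> (2 * M * M) * (inverse la) powi (n - m) * nr m x"
proof -
  define w where "w = x - P m x"
  let ?a = "\<lambda>j. nr j (U m w j)"
  define d where "d = nat (m - n)"
  define q where "q = d div T2"
  define g where "g = (\<lambda>i. ?a (m - int (T2 * i)))"
  have "g (Suc i) \<le> g i / 2" for i
  proof -
    have e: "m - int (T2 * Suc i) = (m - int (T2 * i)) - 2 * int L" by (simp add: T2_def algebra_simps)
    show ?thesis apply (simp only: g_def e) by (rule unstable_half) simp
  qed
  then have gq: "g q \<le> g 0 / 2 ^ q" by (rule halving)
  have "T2 * q \<le> d" unfolding q_def by simp
  then have kn: "n \<le> m - int (T2 * q)" using assms d_def by linarith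
  have g0: "g 0 \<le> M * nr m x"
  proof -
    have "g 0 = nr m w" unfolding g_def using U_m[of m w] P_Q[of m x] w_def by simp
    also have "\<dots> \<le> nr m x + nr m (P m x)" unfolding w_def by (rule nr_diff_le)
    also have "\<dots> \<le> nr m x + M0 * nr m x" using sol_bound[of m m x] unfolding P_def by simp
    finally show ?thesis by (simp add: M_def algebra_simps)
  qed
  have "nr n (the_inv_into {y. P n y = 0} (evol A m n) (x - P m x)) = ?a n"
    using unstable_inv assms w_def by simp
  also have "\<dots> \<le> M * g q" unfolding g_def using unstable_mono[of n "m - int (T2 * q)" m w] kn by simp
  also have "\<dots> \<le> M * (g 0 / 2 ^ q)" using gq M_ge by (intro mult_left_mono) auto
  also have "\<dots> \<le> M * (M * nr m x / 2 ^ q)" using g0 M_ge by (intro mult_left_mono divide_right_mono) auto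
  also have "\<dots> = (M * M * nr m x) * (1/2) ^ q" by (simp add: power_one_over)
  also have "\<dots> \<le> (M * M * nr m x) * (2 * la ^ d)"
    using pow_bound[OF T2_pos, of d] nr_nonneg[of m x] M_ge unfolding q_def la_def by (intro mult_left_mono) auto
  also have "la ^ d = (inverse la) powi (n - m)"
  proof -
    have "n - m = - int d" using assms d_def by simp
    then show ?thesis by (simp add: power_int_minus power_inverse)
  qed
  finally show ?thesis by (simp add: algebra_simps)
qed

lemma dich_main: "exp_dichotomy A nr"
  unfolding exp_dichotomy_def
proof (intro exI[of _ P] conjI allI)
  fix m
  show "bounded_linear (P m)" by (rule P_bl)
  show "P m \<circ> P m = P m" using P_idem by (auto simp: fun_eq_iff)
  show "A m \<circ> P m = P (m + 1) \<circ> A m" using P_inv by (auto simp: fun_eq_iff)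
  show "bij_betw (A m) {x. P m x = 0} {x. P (m + 1) x = 0}" by (rule A_bij)
next
  have "2 * M * M > 0" using M_ge by simp
  moreover have "1 < inverse la" using la_prop by (simp add: one_less_inverse)
  ultimately show "\<exists>D>0. \<exists>la mu::real. 0 < la \<and> la < 1 \<and> 1 < mu \<and>
          (\<forall>n m x. n \<ge> m \<longrightarrow>
             nr n (evol A n m (P m x)) \<le> D * la ^ nat (n - m) * nr m x) \<and>
          (\<forall>n m x. n \<le> m \<longrightarrow>
             nr n (the_inv_into {y. P n y = 0} (evol A m n) (x - P m x))
               \<le> D * mu powi (n - m) * nr m x)"
    using la_prop stable_est unstable_est by blast
qed

end

theorem theorem3p4:
  fixes Bs :: "(int \<Rightarrow> real) set" and nB :: "(int \<Rightarrow> real) \<Rightarrow> real"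
    and nr :: "int \<Rightarrow> 'a::banach \<Rightarrow> real"
    and A :: "int \<Rightarrow> 'a \<Rightarrow> 'a"
  assumes "banach_seq_space Bs nB"
    and "admissible Bs nB"
    and "\<forall>m. is_norm (nr m) \<and> equiv_to_norm (nr m)"
    and "\<forall>m. bounded_linear (A m)"
    and "bij_betw (T_B A) (dom_T_B Bs nr A) (Y_B Bs nr)"
  shows "exp_dichotomy A nr"
proof -
  interpret dich Bs nB nr A using assms by (unfold_locales)
  show ?thesis by (rule dich_main)
qed

end
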